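(* Let $N\ge3$. For any $V\in\mathcal{V}$ there exist $\tilde V\in\mathcal{V}$ and $\tilde W\in L^{N/2}(\mathbb{R}^N)\cap L^\infty(\mathbb{R}^N)$ such that $\mu(\tilde V)>0$ and $V=\tilde V+\tilde W$.
   Context: $\mathcal{D}^{1,2}(\mathbb{R}^N)$ is the completion of $C_c^\infty(\mathbb{R}^N)$ for the norm $(\int|\nabla u|^2)^{1/2}$. The class $\mathcal{V}$ consists of all functions $V(x)=\sum_{i=1}^k\frac{\lambda_i\chi_{B(a_i,r_i)}(x)}{|x-a_i|^2}+\frac{\lambda_\infty\chi_{\mathbb{R}^N\setminus B(0,R)}(x)}{|x|^2}+W(x)$ with $k\in\mathbb{N}$, $r_i,R>0$, $a_i$ pairwise distinct, $\lambda_i,\lambda_\infty<\frac{(N-2)^2}{4}$, $W\in L^{N/2}(\mathbb{R}^N)\cap L^\infty(\mathbb{R}^N)$. $\mu(V)=\inf_{u\in\mathcal{D}^{1,2}(\mathbb{R}^N)\setminus\{0\}}\frac{\int(|\nabla u|^2-Vu^2)}{\int|\nabla u|^2}$. *)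

theory Defs
  imports "HOL-Analysis.Analysis"
begin

text \<open>Functions on R^N are modelled as functions on the type real^'n, N = CARD('n).\<close>

definition partial_deriv :: "'n::finite \<Rightarrow> (real^'n \<Rightarrow> real) \<Rightarrow> real^'n \<Rightarrow> real" where
  "partial_deriv i u x = frechet_derivative u (at x) (axis i 1)"

definition grad :: "(real^'n::finite \<Rightarrow> real) \<Rightarrow> real^'n \<Rightarrow> real^'n" where
  "grad u x = (\<chi> i. partial_deriv i u x)"

fun Ck :: "nat \<Rightarrow> (real^'n::finite \<Rightarrow> real) \<Rightarrow> bool" where
  "Ck 0 u = continuous_on UNIV u"
| "Ck (Suc k) u = (u differentiable_on UNIV \<and> (\<forall>i. Ck k (partial_deriv i u)))"

definition smooth_compact_support :: "(real^'n::finite \<Rightarrow> real) \<Rightarrow> bool" where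
  "smooth_compact_support u \<longleftrightarrow> (\<forall>k. Ck k u) \<and> compact (closure {x. u x \<noteq> 0})"

definition LN2_Linf :: "(real^'n::finite \<Rightarrow> real) \<Rightarrow> bool" where
  "LN2_Linf W \<longleftrightarrow> W \<in> borel_measurable lebesgue
     \<and> integrable lebesgue (\<lambda>x. \<bar>W x\<bar> powr (real CARD('n) / 2))
     \<and> (\<exists>C. AE x in lebesgue. \<bar>W x\<bar> \<le> C)"

definition potential_class :: "(real^'n::finite \<Rightarrow> real) set" where
  "potential_class = {V. \<exists>(k::nat) (lam::nat \<Rightarrow> real) (a::nat \<Rightarrow> real^'n) (r::nat \<Rightarrow> real)
        (lam_inf::real) (R::real) (W::real^'n \<Rightarrow> real).
      (\<forall>i<k. r i > 0) \<and> R > 0 \<and> inj_on a {..<k}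
      \<and> (\<forall>i<k. lam i < (real CARD('n) - 2)^2 / 4) \<and> lam_inf < (real CARD('n) - 2)^2 / 4
      \<and> LN2_Linf W
      \<and> (\<forall>x. V x = (\<Sum>i<k. lam i * indicator (ball (a i) (r i)) x / (norm (x - a i))^2)
                  + lam_inf * indicator (UNIV - ball 0 R) x / (norm x)^2 + W x)}"

text \<open>\<mu>(V), as an extended real (the infimum is taken over the dense subspace
  C_c^\<infinity>(R^N) of D^{1,2}(R^N)).\<close>
definition mu :: "(real^'n::finite \<Rightarrow> real) \<Rightarrow> ereal" where
  "mu V = (INF u \<in> {u. smooth_compact_support u \<and> u \<noteq> (\<lambda>x. 0)}.
      ereal (((LINT x|lebesgue. (norm (grad u x))^2) - (LINT x|lebesgue. V x * (u x)^2))
             / (LINT x|lebesgue. (norm (grad u x))^2)))"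

end

theory Submission
  imports Defs "HOL-Real_Asymp.Real_Asymp"
begin

lemma lebesgue_translation:
  fixes t :: "'a::euclidean_space"
  shows "lebesgue = distr lebesgue lebesgue (\<lambda>x. t + x)"
    and "(\<lambda>x. t + x) \<in> lebesgue \<rightarrow>\<^sub>M lebesgue"
proof -
  have e: "(\<lambda>x. t + (\<Sum>j\<in>Basis. (1 * (x \<bullet> j)) *\<^sub>R j)) = (\<lambda>x::'a. t + x)"
    by (simp add: euclidean_representation)
  show "lebesgue = distr lebesgue lebesgue (\<lambda>x. t + x)"
    using lebesgue_affine_euclidean[of "\<lambda>_. 1" t] using e by (simp add: density_1 euclidean_representation)
  show "(\<lambda>x. t + x) \<in> lebesgue \<rightarrow>\<^sub>M lebesgue"
    using lebesgue_affine_measurable[of "\<lambda>_. 1" t] e by (simp add: euclidean_representation)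
qed

lemma integral_translate:
  fixes f :: "'a::euclidean_space \<Rightarrow> real"
  assumes "f \<in> borel_measurable lebesgue"
  shows "(LINT x|lebesgue. f (t + x)) = (LINT x|lebesgue. f x)"
    and "integrable lebesgue (\<lambda>x. f (t + x)) \<longleftrightarrow> integrable lebesgue f"
proof -
  have "(LINT x|lebesgue. f x) = integral\<^sup>L (distr lebesgue lebesgue (\<lambda>x. t + x)) f"
    using lebesgue_translation(1)[of t] by simp
  also have "\<dots> = (LINT x|lebesgue. f (t + x))"
    by (rule integral_distr[OF lebesgue_translation(2) assms])
  finally show "(LINT x|lebesgue. f (t + x)) = (LINT x|lebesgue. f x)" by simp
  have "integrable lebesgue f = integrable (distr lebesgue lebesgue (\<lambda>x. t + x)) f"
    using lebesgue_translation(1)[of t] by simp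
  also have "\<dots> = integrable lebesgue (\<lambda>x. f (t + x))"
    by (rule integrable_distr_eq[OF lebesgue_translation(2) assms])
  finally show "integrable lebesgue (\<lambda>x. f (t + x)) \<longleftrightarrow> integrable lebesgue f" by simp
qed

lemma integrable_cont_compact:
  fixes g :: "'a::euclidean_space \<Rightarrow> real"
  assumes "continuous_on UNIV g" "compact K" "\<And>x. x \<notin> K \<Longrightarrow> g x = 0"
  shows "integrable lebesgue g"
proof -
  have "integrable lborel (\<lambda>x. indicator K x *\<^sub>R g x)"
    by (rule borel_integrable_compact[OF assms(2)]) (rule continuous_on_subset[OF assms(1)], auto)
  moreover have "(\<lambda>x. indicator K x *\<^sub>R g x) = g"
    using assms(3) by (auto simp: indicator_def of_bool_def)
  ultimately have "integrable lborel g" by simp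
  moreover have "g \<in> borel_measurable borel"
    using assms(1) by (simp add: borel_measurable_continuous_onI)
  ultimately show ?thesis
    by (simp add: integrable_completion)
qed

lemma bounded_cont_compact:
  fixes g :: "'a::euclidean_space \<Rightarrow> real"
  assumes "continuous_on UNIV g" "compact K" "\<And>x. x \<notin> K \<Longrightarrow> g x = 0"
  obtains B where "B \<ge> 0" "\<And>x. \<bar>g x\<bar> \<le> B"
proof -
  have "compact (g ` K)"
    by (rule compact_continuous_image[OF continuous_on_subset[OF assms(1)] assms(2)]) auto
  then obtain B0 where B0: "\<And>y. y \<in> g ` K \<Longrightarrow> norm y \<le> B0"
    using compact_imp_bounded bounded_iff by metis
  show ?thesis
  proof (rule that[of "max B0 0"])
    show "\<bar>g x\<bar> \<le> max B0 0" for x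
      using B0[of "g x"] assms(3)[of x] by (cases "x \<in> K") auto
  qed simp
qed

lemma ibp_line:
  fixes h h' :: "'a::euclidean_space \<Rightarrow> real" and e :: 'a
  assumes ch': "continuous_on UNIV h'" and ch: "continuous_on UNIV h"
   and K: "compact K" and hz: "\<And>x. x \<notin> K \<Longrightarrow> h x = 0" and h'z: "\<And>x. x \<notin> K \<Longrightarrow> h' x = 0"
   and d: "\<And>x. ((\<lambda>t. h (x + t *\<^sub>R e)) has_real_derivative h' x) (at 0)"
  shows "(LINT x|lebesgue. h' x) = 0"
proof -
  obtain B where B0: "B \<ge> 0" and B: "\<And>x. \<bar>h' x\<bar> \<le> B"
    using bounded_cont_compact[OF ch' K h'z] by blast
  obtain M where M: "\<And>x. x \<in> K \<Longrightarrow> norm x \<le> M"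
    using compact_imp_bounded[OF K] unfolding bounded_iff by blast
  define K' where "K' = cball (0::'a) (M + norm e)"
  define t where "t n = 1 / real (Suc n)" for n
  have tpos: "t n > 0" "t n \<le> 1" for n by (auto simp: t_def)
  define q where "q n x = (h (x + t n *\<^sub>R e) - h x) / t n" for n x
  have dd: "((\<lambda>s. h (x + s *\<^sub>R e)) has_real_derivative h' (x + s *\<^sub>R e)) (at s)" for x s
  proof -
    have "((\<lambda>r. h ((x + s *\<^sub>R e) + r *\<^sub>R e)) has_real_derivative h' (x + s *\<^sub>R e)) (at 0)"
      by (rule d)
    then have "((\<lambda>r. h (x + (r + s) *\<^sub>R e)) has_real_derivative h' (x + s *\<^sub>R e)) (at 0)"
      by (simp add: algebra_simps)
    then show ?thesis
      using DERIV_shift[of "\<lambda>r. h (x + r *\<^sub>R e)" "h' (x + s *\<^sub>R e)" 0 s] by simp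
  qed
  have intK: "integrable lebesgue (\<lambda>x. B * indicator K' x)"
  proof -
    have "emeasure lebesgue K' < \<infinity>"
      unfolding K'_def using emeasure_bounded_finite[of "cball (0::'a) (M + norm e)"] by simp
    then show ?thesis
      unfolding K'_def by (intro integrable_mult_right integrable_indicator) (auto simp: less_top)
  qed
  have meas_h: "h \<in> borel_measurable lebesgue"
    using ch by (simp add: borel_measurable_continuous_onI measurable_completion)
  have int_h: "integrable lebesgue h" by (rule integrable_cont_compact[OF ch K hz])
  have qint: "(LINT x|lebesgue. q n x) = 0" for n
  proof -
    have i2: "integrable lebesgue (\<lambda>x. h (t n *\<^sub>R e + x))"
      using integral_translate(2)[OF meas_h, of "t n *\<^sub>R e"] int_h by simp
    have "(LINT x|lebesgue. q n x) = (LINT x|lebesgue. h (t n *\<^sub>R e + x) - h x) / t n"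
      unfolding q_def by (simp add: add.commute)
    also have "\<dots> = ((LINT x|lebesgue. h (t n *\<^sub>R e + x)) - (LINT x|lebesgue. h x)) / t n"
      using i2 int_h by simp
    also have "\<dots> = 0" using integral_translate(1)[OF meas_h] by simp
    finally show ?thesis .
  qed
  have "(\<lambda>n. LINT x|lebesgue. q n x) \<longlonglongrightarrow> (LINT x|lebesgue. h' x)"
  proof (rule integral_dominated_convergence[where w="\<lambda>x. B * indicator K' x"])
    show "h' \<in> borel_measurable lebesgue"
      using ch' by (simp add: borel_measurable_continuous_onI measurable_completion)
    show "q n \<in> borel_measurable lebesgue" for n
    proof -
      have c1: "continuous_on UNIV (\<lambda>x. h (x + t n *\<^sub>R e))"
        by (rule continuous_on_compose2[OF ch]) (auto intro!: continuous_intros)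
      have c2: "continuous_on UNIV (\<lambda>x. h (x + t n *\<^sub>R e) - h x)"
        by (rule continuous_on_diff[OF c1 ch])
      have "continuous_on UNIV (q n)"
        unfolding q_def using tpos(1)[of n]
        by (intro continuous_on_divide[OF c2 continuous_on_const]) auto
      then show ?thesis by (simp add: borel_measurable_continuous_onI measurable_completion)
    qed
    show "integrable lebesgue (\<lambda>x. B * indicator K' x)" by (rule intK)
    show "AE x in lebesgue. (\<lambda>n. q n x) \<longlonglongrightarrow> h' x"
    proof (rule AE_I2)
      fix x
      have "((\<lambda>s. (h (x + s *\<^sub>R e) - h x) / s) \<longlongrightarrow> h' x) (at 0)"
        using d[of x] unfolding DERIV_def by simp
      moreover have "filterlim t (at 0) sequentially"
      proof -
        have "t \<longlonglongrightarrow> 0" unfolding t_def by (rule LIMSEQ_Suc[OF lim_const_over_n])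
        then show ?thesis using tpos by (simp add: filterlim_at less_imp_neq[symmetric])
      qed
      ultimately have "((\<lambda>n. (h (x + t n *\<^sub>R e) - h x) / t n) \<longlongrightarrow> h' x) sequentially"
        by (rule filterlim_compose)
      then show "(\<lambda>n. q n x) \<longlonglongrightarrow> h' x"
        unfolding q_def .
    qed
    show "AE x in lebesgue. norm (q n x) \<le> B * indicator K' x" for n
    proof (rule AE_I2)
      fix x
      have bq: "\<bar>q n x\<bar> \<le> B"
      proof -
        obtain z where "0 < z" "z < t n"
          and eq: "h (x + t n *\<^sub>R e) - h (x + 0 *\<^sub>R e) = (t n - 0) * h' (x + z *\<^sub>R e)"
          using MVT2[OF tpos(1)[of n], where f="\<lambda>s. h (x + s *\<^sub>R e)" and f'="\<lambda>s. h' (x + s *\<^sub>R e)"] dd by blast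
        then have "q n x = h' (x + z *\<^sub>R e)"
          unfolding q_def using tpos(1)[of n] by simp
        then show ?thesis using B by simp
      qed
      show "norm (q n x) \<le> B * indicator K' x"
      proof (cases "x \<in> K'")
        case True then show ?thesis using bq by simp
      next
        case False
        then have nx: "norm x > M + norm e" unfolding K'_def by (simp add: not_le)
        have "x \<notin> K"
        proof
          assume "x \<in> K"
          then have "norm x \<le> M" by (rule M)
          then show False using nx norm_ge_zero[of e] by linarith
        qed
        moreover have "x + t n *\<^sub>R e \<notin> K"
        proof
          assume "x + t n *\<^sub>R e \<in> K"
          then have "norm (x + t n *\<^sub>R e) \<le> M" by (rule M)
          moreover have "norm (t n *\<^sub>R e) \<le> norm e" using tpos[of n] by (simp add: mult_left_le_one_le)
          ultimately have "norm x \<le> M + norm e" using norm_triangle_ineq4[of "x + t n *\<^sub>R e" "t n *\<^sub>R e"] by simp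
          then show False using nx by simp
        qed
        ultimately show ?thesis using False hz unfolding q_def by simp
      qed
    qed
  qed
  then show ?thesis using qint LIMSEQ_unique by (simp add: LIMSEQ_const_iff)
qed

lemma Ck_mono_data:
  fixes u :: "real^'n::finite \<Rightarrow> real"
  assumes "smooth_compact_support u"
  shows "continuous_on UNIV u" "u differentiable_on UNIV"
    "\<And>i. continuous_on UNIV (partial_deriv i u)"
    "compact (closure {x. u x \<noteq> 0})"
proof -
  have all: "\<And>k. Ck k u" using assms unfolding smooth_compact_support_def by blast
  show "continuous_on UNIV u" using all[of 0] by simp
  show "u differentiable_on UNIV" using all[of 1] by simp
  show "continuous_on UNIV (partial_deriv i u)" for i using all[of 1] by simp
  show "compact (closure {x. u x \<noteq> 0})" using assms unfolding smooth_compact_support_def by blast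
qed

lemma outside_support:
  fixes u :: "real^'n::finite \<Rightarrow> real"
  assumes "x \<notin> closure {x. u x \<noteq> 0}"
  shows "u x = 0" "partial_deriv i u x = 0"
proof -
  show "u x = 0" using assms closure_subset[of "{x. u x \<noteq> 0}"] by auto
  let ?S = "- closure {x. u x \<noteq> 0}"
  have "((\<lambda>_. 0) has_derivative (\<lambda>_. 0)) (at x)" by simp
  then have "(u has_derivative (\<lambda>_. 0)) (at x)"
  proof (rule has_derivative_transform_within_open)
    show "open ?S" by auto
    show "x \<in> ?S" using assms by simp
    show "\<And>y. y \<in> ?S \<Longrightarrow> 0 = u y" using closure_subset[of "{x. u x \<noteq> 0}"] by auto
  qed
  then have "frechet_derivative u (at x) = (\<lambda>_. 0)"
    by (rule frechet_derivative_at[symmetric])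
  then show "partial_deriv i u x = 0" unfolding partial_deriv_def by simp
qed

lemma line_deriv:
  fixes u :: "real^'n::finite \<Rightarrow> real"
  assumes "u differentiable (at x)"
  shows "((\<lambda>t. u (x + t *\<^sub>R axis j 1)) has_real_derivative partial_deriv j u x) (at 0)"
proof -
  let ?D = "frechet_derivative u (at x)"
  have D: "(u has_derivative ?D) (at x)" using assms frechet_derivative_works by blast
  have L: "((\<lambda>t::real. x + t *\<^sub>R axis j 1) has_derivative (\<lambda>t. t *\<^sub>R axis j 1)) (at 0)"
    by (auto intro!: derivative_eq_intros)
  have D0: "(u has_derivative ?D) (at (x + 0 *\<^sub>R axis j 1))" using D by simp
  have "((\<lambda>t. u (x + t *\<^sub>R axis j 1)) has_derivative (\<lambda>t. ?D (t *\<^sub>R axis j 1))) (at 0)"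
    using has_derivative_compose[OF L D0] by simp
  moreover have "(\<lambda>t. ?D (t *\<^sub>R axis j 1)) = (\<lambda>t. partial_deriv j u x * t)"
  proof
    fix t :: real
    have "linear ?D" using D has_derivative_linear by blast
    then have "?D (t *\<^sub>R axis j 1) = t *\<^sub>R ?D (axis j 1)" by (rule linear_scale)
    then show "?D (t *\<^sub>R axis j 1) = partial_deriv j u x * t"
      unfolding partial_deriv_def by simp
  qed
  ultimately show ?thesis unfolding has_field_derivative_def by simp
qed

definition sc :: "real \<Rightarrow> real^'n::finite \<Rightarrow> real^'n \<Rightarrow> real" where
  "sc \<epsilon> c x = (norm (x - c))^2 + \<epsilon>"
definition Phi :: "real \<Rightarrow> real \<Rightarrow> (real^'n::finite) set \<Rightarrow> real^'n \<Rightarrow> real" where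
  "Phi p \<epsilon> C x = (\<Sum>c\<in>C. sc \<epsilon> c x powr (-p))"
definition Pj :: "real \<Rightarrow> real \<Rightarrow> (real^'n::finite) set \<Rightarrow> 'n \<Rightarrow> real^'n \<Rightarrow> real" where
  "Pj p \<epsilon> C j x = (\<Sum>c\<in>C. sc \<epsilon> c x powr (-p-1) * (x$j - c$j))"
definition Fj :: "real \<Rightarrow> real \<Rightarrow> (real^'n::finite) set \<Rightarrow> 'n \<Rightarrow> real^'n \<Rightarrow> real" where
  "Fj p \<epsilon> C j x = 2*p*Pj p \<epsilon> C j x / Phi p \<epsilon> C x"
definition dPj :: "real \<Rightarrow> real \<Rightarrow> (real^'n::finite) set \<Rightarrow> 'n \<Rightarrow> real^'n \<Rightarrow> real" where
  "dPj p \<epsilon> C j x = (\<Sum>c\<in>C. sc \<epsilon> c x powr (-p-1) - 2*(p+1) * sc \<epsilon> c x powr (-p-2) * (x$j - c$j)^2)"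
definition dFj :: "real \<Rightarrow> real \<Rightarrow> (real^'n::finite) set \<Rightarrow> 'n \<Rightarrow> real^'n \<Rightarrow> real" where
  "dFj p \<epsilon> C j x = 2*p*dPj p \<epsilon> C j x / Phi p \<epsilon> C x + (Fj p \<epsilon> C j x)^2"

lemma sc_pos: "\<epsilon> > 0 \<Longrightarrow> sc \<epsilon> c x > 0"
  unfolding sc_def by (simp add: add_nonneg_pos)

lemma sc_line: "sc \<epsilon> c (x + t *\<^sub>R axis j 1) = sc \<epsilon> c x + 2*t*(x$j - c$j) + t^2"
proof -
  have e1: "x + t *\<^sub>R axis j 1 - c = (x - c) + t *\<^sub>R axis j 1" by simp
  have "\<And>v::real^'a. (norm (v + t *\<^sub>R axis j 1))^2 = (norm v)^2 + 2*t*(v$j) + t^2"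
  proof -
    fix v :: "real^'a"
    have "(norm (v + t *\<^sub>R axis j 1))^2 = (v + t *\<^sub>R axis j 1) \<bullet> (v + t *\<^sub>R axis j 1)"
      by (rule power2_norm_eq_inner)
    also have "\<dots> = v \<bullet> v + 2 * t * (v \<bullet> axis j 1) + t * t * (axis j 1 \<bullet> axis j (1::real))"
      by (simp add: inner_add_left inner_add_right inner_commute algebra_simps)
    also have "\<dots> = (norm v)^2 + 2*t*(v$j) + t^2"
      by (simp add: inner_axis power2_norm_eq_inner[symmetric] power2_eq_square)
    finally show "(norm (v + t *\<^sub>R axis j 1))^2 = (norm v)^2 + 2*t*(v$j) + t^2" .
  qed
  then show ?thesis unfolding sc_def e1 by simp
qed

lemma comp_line: "(x + t *\<^sub>R axis j 1)$j - c$j = (x$j - c$j) + t"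
  by (simp add: axis_def)

lemma deriv_sc:
  "((\<lambda>t. sc \<epsilon> c (x + t *\<^sub>R axis j 1)) has_real_derivative 2*(x$j - c$j)) (at 0)"
proof -
  have "((\<lambda>t. sc \<epsilon> c x + 2*t*(x$j - c$j) + t^2) has_real_derivative 2*(x$j - c$j)) (at 0)"
    by (auto intro!: derivative_eq_intros)
  then show ?thesis by (simp add: sc_line)
qed

lemma deriv_sc_powr:
  assumes "\<epsilon> > 0"
  shows "((\<lambda>t. sc \<epsilon> c (x + t *\<^sub>R axis j 1) powr q) has_real_derivative
           q * sc \<epsilon> c x powr (q-1) * (2*(x$j - c$j))) (at 0)"
proof -
  have pos: "0 < sc \<epsilon> c (x + 0 *\<^sub>R axis j 1)" using sc_pos[OF assms] by simp
  have "((\<lambda>t. sc \<epsilon> c (x + t *\<^sub>R axis j 1) powr q) has_real_derivative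
          (q * sc \<epsilon> c (x + 0 *\<^sub>R axis j 1) powr (q-1)) * (2*(x$j - c$j))) (at 0)"
    by (rule DERIV_chain2[OF has_real_derivative_powr[OF pos] deriv_sc])
  then show ?thesis by simp
qed

lemma Phi_pos: "\<epsilon> > 0 \<Longrightarrow> finite C \<Longrightarrow> C \<noteq> {} \<Longrightarrow> Phi p \<epsilon> C x > 0"
  unfolding Phi_def
proof (intro sum_pos)
  fix i assume "\<epsilon> > 0"
  then show "0 < sc \<epsilon> i x powr (-p)" using sc_pos[of \<epsilon> i x] by simp
qed auto

lemma deriv_Fj:
  assumes "\<epsilon> > 0" "finite C" "C \<noteq> {}"
  shows "((\<lambda>t. Fj p \<epsilon> C j (x + t *\<^sub>R axis j 1)) has_real_derivative dFj p \<epsilon> C j x) (at 0)"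
proof -
  have dPhi: "((\<lambda>t. Phi p \<epsilon> C (x + t *\<^sub>R axis j 1)) has_real_derivative -2*p*Pj p \<epsilon> C j x) (at 0)"
  proof -
    have "((\<lambda>t. \<Sum>c\<in>C. sc \<epsilon> c (x + t *\<^sub>R axis j 1) powr (-p)) has_real_derivative
            (\<Sum>c\<in>C. (-p) * sc \<epsilon> c x powr (-p-1) * (2*(x$j - c$j)))) (at 0)"
      by (rule DERIV_sum) (use deriv_sc_powr[OF assms(1), of _ x j "-p"] in auto)
    moreover have "(\<Sum>c\<in>C. (-p) * sc \<epsilon> c x powr (-p-1) * (2*(x$j - c$j))) = -2*p*Pj p \<epsilon> C j x"
      unfolding Pj_def by (simp add: sum_distrib_left algebra_simps)
    ultimately show ?thesis unfolding Phi_def by simp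
  qed
  have dP: "((\<lambda>t. Pj p \<epsilon> C j (x + t *\<^sub>R axis j 1)) has_real_derivative dPj p \<epsilon> C j x) (at 0)"
  proof -
    have "((\<lambda>t. \<Sum>c\<in>C. sc \<epsilon> c (x + t *\<^sub>R axis j 1) powr (-p-1) * ((x$j - c$j) + t)) has_real_derivative
            (\<Sum>c\<in>C. ((-p-1) * sc \<epsilon> c x powr (-p-1-1) * (2*(x$j - c$j))) * ((x$j - c$j) + 0)
                     + sc \<epsilon> c x powr (-p-1) * 1)) (at 0)"
    proof (rule DERIV_sum)
      fix c assume "c \<in> C"
      have "((\<lambda>t. (x$j - c$j) + t) has_real_derivative 1) (at 0)"
        by (auto intro!: derivative_eq_intros)
      from DERIV_mult[OF deriv_sc_powr[OF assms(1), of c x j "-p-1"] this]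
      show "((\<lambda>t. sc \<epsilon> c (x + t *\<^sub>R axis j 1) powr (-p-1) * ((x$j - c$j) + t)) has_real_derivative
            ((-p-1) * sc \<epsilon> c x powr (-p-1-1) * (2*(x$j - c$j))) * ((x$j - c$j) + 0)
                     + sc \<epsilon> c x powr (-p-1) * 1) (at 0)"
        by simp
    qed
    moreover have "(\<Sum>c\<in>C. ((-p-1) * sc \<epsilon> c x powr (-p-1-1) * (2*(x$j - c$j))) * ((x$j - c$j) + 0)
                     + sc \<epsilon> c x powr (-p-1) * 1) = dPj p \<epsilon> C j x"
      unfolding dPj_def by (intro sum.cong refl) (simp add: algebra_simps power2_eq_square)
    ultimately show ?thesis unfolding Pj_def comp_line by simp
  qed
  have ne: "Phi p \<epsilon> C (x + 0 *\<^sub>R axis j 1) \<noteq> 0" using Phi_pos[OF assms] by (simp add: less_imp_neq[symmetric])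
  have "((\<lambda>t. 2*p*Pj p \<epsilon> C j (x + t *\<^sub>R axis j 1) / Phi p \<epsilon> C (x + t *\<^sub>R axis j 1)) has_real_derivative
     ((2*p*dPj p \<epsilon> C j x) * Phi p \<epsilon> C (x + 0 *\<^sub>R axis j 1) - 2*p*Pj p \<epsilon> C j (x + 0 *\<^sub>R axis j 1) * (-2*p*Pj p \<epsilon> C j x))
      / (Phi p \<epsilon> C (x + 0 *\<^sub>R axis j 1) * Phi p \<epsilon> C (x + 0 *\<^sub>R axis j 1))) (at 0)"
    by (rule DERIV_divide[OF DERIV_cmult[OF dP] dPhi ne])
  moreover have "((2*p*dPj p \<epsilon> C j x) * Phi p \<epsilon> C (x + 0 *\<^sub>R axis j 1) - 2*p*Pj p \<epsilon> C j (x + 0 *\<^sub>R axis j 1) * (-2*p*Pj p \<epsilon> C j x))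
      / (Phi p \<epsilon> C (x + 0 *\<^sub>R axis j 1) * Phi p \<epsilon> C (x + 0 *\<^sub>R axis j 1)) = dFj p \<epsilon> C j x"
    using ne unfolding dFj_def Fj_def by (simp add: field_simps power2_eq_square)
  ultimately show ?thesis unfolding Fj_def by simp
qed

lemma Phi_ne: "\<epsilon> > 0 \<Longrightarrow> finite C \<Longrightarrow> C \<noteq> {} \<Longrightarrow> Phi p \<epsilon> C x \<noteq> 0"
  using Phi_pos[of \<epsilon> C p x] by simp

lemma cont_sc: "continuous_on UNIV (sc \<epsilon> c)"
  unfolding sc_def by (intro continuous_intros)

lemma cont_sc_powr: "\<epsilon> > 0 \<Longrightarrow> continuous_on UNIV (\<lambda>x. sc \<epsilon> c x powr q)"
  by (intro continuous_on_powr cont_sc continuous_on_const) (metis sc_pos less_irrefl)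

lemma cont_Phi: "\<epsilon> > 0 \<Longrightarrow> continuous_on UNIV (Phi p \<epsilon> C)"
  unfolding Phi_def by (intro continuous_on_sum cont_sc_powr)

lemma cont_Pj: "\<epsilon> > 0 \<Longrightarrow> continuous_on UNIV (Pj p \<epsilon> C j)"
  unfolding Pj_def by (intro continuous_on_sum continuous_on_mult cont_sc_powr continuous_intros)

lemma cont_dPj: "\<epsilon> > 0 \<Longrightarrow> continuous_on UNIV (dPj p \<epsilon> C j)"
  unfolding dPj_def by (intro continuous_on_sum continuous_on_mult continuous_on_diff cont_sc_powr continuous_intros)

lemma cont_Fj: "\<epsilon> > 0 \<Longrightarrow> finite C \<Longrightarrow> C \<noteq> {} \<Longrightarrow> continuous_on UNIV (Fj p \<epsilon> C j)"
  unfolding Fj_def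
  by (intro continuous_on_divide continuous_on_mult continuous_on_const cont_Pj cont_Phi)
     (simp_all add: Phi_ne)

lemma cont_dFj: "\<epsilon> > 0 \<Longrightarrow> finite C \<Longrightarrow> C \<noteq> {} \<Longrightarrow> continuous_on UNIV (dFj p \<epsilon> C j)"
  unfolding dFj_def
  by (intro continuous_on_add continuous_on_power cont_Fj continuous_on_divide continuous_on_mult continuous_on_const cont_dPj cont_Phi)
     (simp_all add: Phi_ne)

lemma grad_sq: "(norm (grad u x))^2 = (\<Sum>j\<in>UNIV. (partial_deriv j u x)^2)"
  unfolding power2_norm_eq_inner inner_vec_def grad_def by (simp add: power2_eq_square)

definition Kfun :: "real \<Rightarrow> real \<Rightarrow> (real^'n::finite) set \<Rightarrow> real^'n \<Rightarrow> real" where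
  "Kfun p \<epsilon> C x = 2*p*(\<Sum>j\<in>UNIV. dPj p \<epsilon> C j x) / Phi p \<epsilon> C x"

lemma cont_Kfun: "\<epsilon> > 0 \<Longrightarrow> finite C \<Longrightarrow> C \<noteq> {} \<Longrightarrow> continuous_on UNIV (Kfun p \<epsilon> C)"
  unfolding Kfun_def
  by (intro continuous_on_divide continuous_on_mult continuous_on_const continuous_on_sum cont_dPj cont_Phi)
     (simp_all add: Phi_ne)

lemma hardy_eps:
  fixes u :: "real^'n::finite \<Rightarrow> real"
  assumes sm: "smooth_compact_support u" and e: "\<epsilon> > 0" and C: "finite C" "C \<noteq> {}"
  shows "integrable lebesgue (\<lambda>x. Kfun p \<epsilon> C x * (u x)^2)"
    and "integrable lebesgue (\<lambda>x. (norm (grad u x))^2)"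
    and "(LINT x|lebesgue. Kfun p \<epsilon> C x * (u x)^2) \<le> (LINT x|lebesgue. (norm (grad u x))^2)"
proof -
  note U = Ck_mono_data[OF sm]
  define S where "S = closure {x. u x \<noteq> 0}"
  have S: "compact S" using U(4) unfolding S_def .
  have uz: "\<And>x. x \<notin> S \<Longrightarrow> u x = 0" and dz: "\<And>x i. x \<notin> S \<Longrightarrow> partial_deriv i u x = 0"
    unfolding S_def using outside_support by auto
  have ud: "\<And>x. u differentiable (at x)" using U(2) unfolding differentiable_on_def by simp
  define h where "h j x = Fj p \<epsilon> C j x * (u x)^2" for j x
  define h' where "h' j x = dFj p \<epsilon> C j x * (u x)^2 + Fj p \<epsilon> C j x * (2 * u x * partial_deriv j u x)" for j x
  have ch': "continuous_on UNIV (h' j)" for j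
    unfolding h'_def
    by (intro continuous_on_add continuous_on_mult continuous_on_power cont_dFj cont_Fj e C U continuous_on_const)
  have ih': "integrable lebesgue (h' j)" for j
    by (rule integrable_cont_compact[OF ch' S]) (simp add: h'_def uz)
  have h'0: "(LINT x|lebesgue. h' j x) = 0" for j
  proof (rule ibp_line[OF ch' _ S])
    show "continuous_on UNIV (h j)" unfolding h_def
      by (intro continuous_on_mult continuous_on_power cont_Fj e C U)
    show "\<And>x. x \<notin> S \<Longrightarrow> h j x = 0" by (simp add: h_def uz)
    show "\<And>x. x \<notin> S \<Longrightarrow> h' j x = 0" by (simp add: h'_def uz)
    fix x
    have du: "((\<lambda>t. (u (x + t *\<^sub>R axis j 1))^2) has_real_derivative
               2 * u x * partial_deriv j u x) (at 0)"
      using DERIV_power[OF line_deriv[OF ud], of x j 2] by (simp add: mult_ac)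
    have "((\<lambda>t. Fj p \<epsilon> C j (x + t *\<^sub>R axis j 1) * (u (x + t *\<^sub>R axis j 1))^2) has_real_derivative
           dFj p \<epsilon> C j x * (u x)^2 + Fj p \<epsilon> C j x * (2 * u x * partial_deriv j u x)) (at 0)"
      using DERIV_mult[OF deriv_Fj[OF e C, of p j x] du] by (simp add: mult_ac)
    then show "((\<lambda>t. h j (x + t *\<^sub>R axis j 1)) has_real_derivative h' j x) (at 0)"
      unfolding h_def h'_def by simp
  qed
  have cK: "continuous_on UNIV (\<lambda>x. Kfun p \<epsilon> C x * (u x)^2)"
    by (intro continuous_on_mult continuous_on_power cont_Kfun e C U)
  show iK: "integrable lebesgue (\<lambda>x. Kfun p \<epsilon> C x * (u x)^2)"
    by (rule integrable_cont_compact[OF cK S]) (simp add: uz)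
  have gfun: "(\<lambda>x. (norm (grad u x))^2) = (\<lambda>x. \<Sum>j\<in>UNIV. (partial_deriv j u x)^2)"
    by (simp add: grad_sq)
  have cg: "continuous_on UNIV (\<lambda>x. (norm (grad u x))^2)"
    unfolding gfun by (intro continuous_on_sum continuous_on_power U)
  show ig: "integrable lebesgue (\<lambda>x. (norm (grad u x))^2)"
    by (rule integrable_cont_compact[OF cg S]) (simp add: grad_sq dz)
  have pw: "Kfun p \<epsilon> C x * (u x)^2 \<le> (norm (grad u x))^2 + (\<Sum>j\<in>UNIV. h' j x)" for x
  proof -
    have Kx: "Kfun p \<epsilon> C x = (\<Sum>j\<in>UNIV. dFj p \<epsilon> C j x - (Fj p \<epsilon> C j x)^2)"
      unfolding Kfun_def dFj_def by (simp add: sum_divide_distrib sum_distrib_left)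
    have "(norm (grad u x))^2 + (\<Sum>j\<in>UNIV. h' j x) - Kfun p \<epsilon> C x * (u x)^2
          = (\<Sum>j\<in>UNIV. (partial_deriv j u x)^2 + h' j x - (dFj p \<epsilon> C j x - (Fj p \<epsilon> C j x)^2) * (u x)^2)"
      unfolding grad_sq Kx by (simp add: sum.distrib sum_subtractf sum_distrib_right left_diff_distrib)
    also have "\<dots> = (\<Sum>j\<in>UNIV. (partial_deriv j u x + Fj p \<epsilon> C j x * u x)^2)"
      unfolding h'_def by (intro sum.cong refl) (simp add: power2_eq_square algebra_simps)
    also have "\<dots> \<ge> 0" by (intro sum_nonneg) simp
    finally show ?thesis by simp
  qed
  have "(LINT x|lebesgue. Kfun p \<epsilon> C x * (u x)^2) \<le> (LINT x|lebesgue. (norm (grad u x))^2 + (\<Sum>j\<in>UNIV. h' j x))"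
    by (intro integral_mono iK Bochner_Integration.integrable_add ig Bochner_Integration.integrable_sum ih' pw)
  also have "\<dots> = (LINT x|lebesgue. (norm (grad u x))^2) + (\<Sum>j\<in>UNIV. LINT x|lebesgue. h' j x)"
    using ig ih' by (simp add: Bochner_Integration.integral_add Bochner_Integration.integrable_sum Bochner_Integration.integral_sum)
  also have "\<dots> = (LINT x|lebesgue. (norm (grad u x))^2)" by (simp add: h'0)
  finally show "(LINT x|lebesgue. Kfun p \<epsilon> C x * (u x)^2) \<le> (LINT x|lebesgue. (norm (grad u x))^2)" .
qed

definition Gfun :: "real \<Rightarrow> real \<Rightarrow> (real^'n::finite) set \<Rightarrow> real^'n \<Rightarrow> real" where
  "Gfun p \<epsilon> C x = (\<Sum>c\<in>C. sc \<epsilon> c x powr (-p-1)) / Phi p \<epsilon> C x"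

lemma norm_sq_vec: "(norm (v::real^'n::finite))^2 = (\<Sum>j\<in>UNIV. (v$j)^2)"
  unfolding power2_norm_eq_inner inner_vec_def by (simp add: power2_eq_square)

lemma Kfun_ge:
  fixes x :: "real^'n::finite"
  assumes e: "\<epsilon> > 0" and C: "finite C" "C \<noteq> {}" and p: "p \<ge> 0"
  shows "Kfun p \<epsilon> C x \<ge> 2*p*(real CARD('n) - 2*p - 2) * Gfun p \<epsilon> C x"
proof -
  have "(\<Sum>j\<in>UNIV. dPj p \<epsilon> C j x)
      = (\<Sum>c\<in>C. \<Sum>j\<in>UNIV. sc \<epsilon> c x powr (-p-1) - 2*(p+1) * sc \<epsilon> c x powr (-p-2) * (x$j - c$j)^2)"
    unfolding dPj_def by (rule sum.swap)
  also have "\<dots> = (\<Sum>c\<in>C. real CARD('n) * sc \<epsilon> c x powr (-p-1) - 2*(p+1) * sc \<epsilon> c x powr (-p-2) * (norm (x - c))^2)"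
    by (intro sum.cong refl) (simp add: sum_subtractf sum_distrib_left[symmetric] norm_sq_vec)
  also have "\<dots> \<ge> (\<Sum>c\<in>C. (real CARD('n) - 2*p - 2) * sc \<epsilon> c x powr (-p-1))"
  proof (intro sum_mono)
    fix c assume "c \<in> C"
    have s: "sc \<epsilon> c x > 0" using sc_pos[OF e] .
    have "(norm (x - c))^2 \<le> sc \<epsilon> c x" unfolding sc_def using e by simp
    then have "sc \<epsilon> c x powr (-p-2) * (norm (x - c))^2 \<le> sc \<epsilon> c x powr (-p-2) * sc \<epsilon> c x"
      by (intro mult_left_mono) auto
    also have "\<dots> = sc \<epsilon> c x powr (-p-1)"
    proof -
      have "sc \<epsilon> c x powr (-p-1) = sc \<epsilon> c x powr ((-p-2) + 1)" by (rule arg_cong[where f="\<lambda>a. sc \<epsilon> c x powr a"]) simp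
      also have "\<dots> = sc \<epsilon> c x powr (-p-2) * sc \<epsilon> c x powr 1" by (rule powr_add)
      also have "\<dots> = sc \<epsilon> c x powr (-p-2) * sc \<epsilon> c x" using s by simp
      finally show ?thesis by simp
    qed
    finally have "2*(p+1) * (sc \<epsilon> c x powr (-p-2) * (norm (x - c))^2) \<le> 2*(p+1) * sc \<epsilon> c x powr (-p-1)"
      using p by (intro mult_left_mono) auto
    then show "(real CARD('n) - 2*p - 2) * sc \<epsilon> c x powr (-p-1) \<le>
        real CARD('n) * sc \<epsilon> c x powr (-p-1) - 2*(p+1) * sc \<epsilon> c x powr (-p-2) * (norm (x - c))^2"
      by (simp add: algebra_simps)
  qed
  finally have ge: "(\<Sum>j\<in>UNIV. dPj p \<epsilon> C j x) \<ge> (real CARD('n) - 2*p - 2) * (\<Sum>c\<in>C. sc \<epsilon> c x powr (-p-1))"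
    by (simp add: sum_distrib_left)
  have ph: "Phi p \<epsilon> C x > 0" by (rule Phi_pos[OF e C])
  have "2*p*(real CARD('n) - 2*p - 2) * Gfun p \<epsilon> C x
       = (2*p) * ((real CARD('n) - 2*p - 2) * (\<Sum>c\<in>C. sc \<epsilon> c x powr (-p-1))) / Phi p \<epsilon> C x"
    unfolding Gfun_def by simp
  also have "\<dots> \<le> (2*p) * (\<Sum>j\<in>UNIV. dPj p \<epsilon> C j x) / Phi p \<epsilon> C x"
    using ph p ge by (intro divide_right_mono mult_left_mono) auto
  also have "\<dots> = Kfun p \<epsilon> C x" unfolding Kfun_def by simp
  finally show ?thesis .
qed

lemma Gfun_nonneg: "\<epsilon> \<ge> 0 \<Longrightarrow> Gfun p \<epsilon> C x \<ge> 0"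
  unfolding Gfun_def Phi_def by (intro divide_nonneg_nonneg sum_nonneg) auto

lemma cont_Gfun: "\<epsilon> > 0 \<Longrightarrow> finite C \<Longrightarrow> C \<noteq> {} \<Longrightarrow> continuous_on UNIV (Gfun p \<epsilon> C)"
  unfolding Gfun_def
  by (intro continuous_on_divide continuous_on_sum cont_sc_powr cont_Phi) (simp_all add: Phi_ne)

lemma Gfun_tendsto:
  fixes x :: "real^'n::finite"
  assumes C: "finite C" "x \<notin> C"
  assumes e: "e \<longlonglongrightarrow> 0"
  assumes ne: "Phi p 0 C x \<noteq> 0"
  shows "(\<lambda>n. Gfun p (e n) C x) \<longlonglongrightarrow> Gfun p 0 C x"
proof -
  have s: "(\<lambda>n. sc (e n) c x) \<longlonglongrightarrow> sc 0 c x" for c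
    unfolding sc_def using e by (intro tendsto_intros) auto
  have nz: "c \<in> C \<Longrightarrow> sc 0 c x \<noteq> 0" for c
    using C unfolding sc_def by auto
  have "(\<lambda>n. (\<Sum>c\<in>C. sc (e n) c x powr (-p-1)) / (\<Sum>c\<in>C. sc (e n) c x powr (-p)))
        \<longlonglongrightarrow> (\<Sum>c\<in>C. sc 0 c x powr (-p-1)) / (\<Sum>c\<in>C. sc 0 c x powr (-p))"
    using ne unfolding Phi_def
    by (intro tendsto_divide tendsto_sum tendsto_powr s tendsto_const nz) auto
  then show ?thesis unfolding Gfun_def Phi_def .
qed

lemma hardy_limit:
  fixes u :: "real^'n::finite \<Rightarrow> real"
  assumes sm: "smooth_compact_support u" and C: "finite C" "C \<noteq> {}" and p: "p \<ge> 0"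
    and m: "m = 2*p*(real CARD('n) - 2*p - 2)" "m \<ge> 0"
  shows "(\<integral>\<^sup>+x. ennreal (m * Gfun p 0 C x * (u x)^2) \<partial>lebesgue)
           \<le> ennreal (LINT x|lebesgue. (norm (grad u x))^2)"
proof -
  define A where "A = (LINT x|lebesgue. (norm (grad u x))^2)"
  define eps where "eps n = 1 / real (Suc n)" for n
  have epos: "eps n > 0" for n unfolding eps_def by simp
  have elim: "eps \<longlonglongrightarrow> 0" unfolding eps_def by (rule LIMSEQ_Suc[OF lim_const_over_n])
  define f where "f n x = ennreal (m * Gfun p (eps n) C x * (u x)^2)" for n x
  note U = Ck_mono_data[OF sm]
  have fmeas: "f n \<in> borel_measurable lebesgue" for n
  proof -
    have "continuous_on UNIV (\<lambda>x. m * Gfun p (eps n) C x * (u x)^2)"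
      by (intro continuous_on_mult continuous_on_const continuous_on_power cont_Gfun epos C U)
    then have "(\<lambda>x. m * Gfun p (eps n) C x * (u x)^2) \<in> borel_measurable lebesgue"
      by (simp add: borel_measurable_continuous_onI measurable_completion)
    then show ?thesis unfolding f_def by (rule measurable_compose[OF _ measurable_ennreal])
  qed
  have fbound: "integral\<^sup>N lebesgue (f n) \<le> ennreal A" for n
  proof -
    note H = hardy_eps[OF sm epos[of n] C]
    have "integral\<^sup>N lebesgue (f n) \<le> (\<integral>\<^sup>+x. ennreal (Kfun p (eps n) C x * (u x)^2) \<partial>lebesgue)"
      unfolding f_def
    proof (intro nn_integral_mono ennreal_leI mult_right_mono)
      fix x show "m * Gfun p (eps n) C x \<le> Kfun p (eps n) C x"
        using Kfun_ge[OF epos C p, of n x] m(1) by simp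
    qed simp
    also have "\<dots> = ennreal (LINT x|lebesgue. Kfun p (eps n) C x * (u x)^2)"
    proof (rule nn_integral_eq_integral[OF H(1)])
      show "AE x in lebesgue. 0 \<le> Kfun p (eps n) C x * (u x)^2"
      proof (rule AE_I2)
        fix x
        have "0 \<le> m * Gfun p (eps n) C x" using m(2) Gfun_nonneg[of "eps n" p C x] epos[of n] by simp
        also have "\<dots> \<le> Kfun p (eps n) C x" using Kfun_ge[OF epos C p, of n x] m(1) by simp
        finally show "0 \<le> Kfun p (eps n) C x * (u x)^2" by simp
      qed
    qed
    also have "\<dots> \<le> ennreal A" unfolding A_def using H(3) by (rule ennreal_leI)
    finally show ?thesis .
  qed
  have ae: "AE x in lebesgue. x \<notin> C"
    by (rule AE_completion[OF AE_not_in[OF finite_imp_null_set_lborel[OF C(1)]]])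
  have "(\<integral>\<^sup>+x. ennreal (m * Gfun p 0 C x * (u x)^2) \<partial>lebesgue) = (\<integral>\<^sup>+x. liminf (\<lambda>n. f n x) \<partial>lebesgue)"
  proof (rule nn_integral_cong_AE)
    show "AE x in lebesgue. ennreal (m * Gfun p 0 C x * (u x)^2) = liminf (\<lambda>n. f n x)"
      using ae
    proof (rule AE_mp, intro AE_I2 impI)
      fix x :: "real^'n" assume x: "x \<notin> C"
      have ne: "Phi p 0 C x \<noteq> 0"
      proof -
        have "Phi p 0 C x > 0" unfolding Phi_def
        proof (intro sum_pos C)
          fix c assume "c \<in> C"
          then have "sc 0 c x > 0" using x unfolding sc_def by auto
          then show "0 < sc 0 c x powr (-p)" by simp
        qed
        then show ?thesis by simp
      qed
      have "(\<lambda>n. f n x) \<longlonglongrightarrow> ennreal (m * Gfun p 0 C x * (u x)^2)"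
        unfolding f_def
        by (intro tendsto_ennrealI tendsto_mult tendsto_const Gfun_tendsto[OF C(1) x elim ne])
      then show "ennreal (m * Gfun p 0 C x * (u x)^2) = liminf (\<lambda>n. f n x)"
        by (simp add: lim_imp_Liminf)
    qed
  qed
  also have "\<dots> \<le> liminf (\<lambda>n. integral\<^sup>N lebesgue (f n))"
    by (rule nn_integral_liminf[OF fmeas])
  also have "\<dots> \<le> ennreal A"
    using fbound by (intro Liminf_le) auto
  finally show ?thesis unfolding A_def .
qed

lemma powr_m1: "(s::real) > 0 \<Longrightarrow> s powr (-p-1) = 1 / (s * s powr p)"
proof -
  assume s: "s > 0"
  have "s powr (-p-1) = s powr (-(p+1))" by (rule arg_cong[where f="\<lambda>a. s powr a"]) simp
  also have "\<dots> = 1 / s powr (p+1)" by (rule powr_minus_divide)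
  also have "\<dots> = 1 / (s * s powr p)" using s by (simp add: powr_add mult.commute)
  finally show ?thesis .
qed

lemma powr_m0: "(s::real) powr (-p) = 1 / (s powr p)"
  by (rule powr_minus_divide)

lemma Gfun0_eq: "Gfun p 0 C x = (\<Sum>c\<in>C. ((norm (x - c))^2) powr (-p-1)) / (\<Sum>c\<in>C. ((norm (x - c))^2) powr (-p))"
  unfolding Gfun_def Phi_def sc_def by simp

lemma near_bound:
  fixes x a :: "real^'n::finite"
  assumes C: "finite C" "a \<in> C" and p: "p > 0" and eta: "\<eta> \<ge> 0" and d2: "\<delta>2 > 0"
    and sep: "\<And>c. c \<in> C \<Longrightarrow> c \<noteq> a \<Longrightarrow> \<delta>2 \<le> (norm (x - c))^2"
    and xa: "x \<noteq> a" and r: "norm (x - a) < \<rho>"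
    and cond: "real (card C) * \<delta>2 powr (-p) \<le> \<eta> * (\<rho>^2) powr (-p)"
  shows "1 / ((1+\<eta>) * (norm (x - a))^2) \<le> Gfun p 0 C x"
proof -
  define s where "s = (norm (x - a))^2"
  have s0: "s > 0" unfolding s_def using xa by simp
  have sr: "s \<le> \<rho>^2" unfolding s_def using r
    by (intro power_mono) auto
  have num: "s powr (-p-1) \<le> (\<Sum>c\<in>C. ((norm (x - c))^2) powr (-p-1))"
    using member_le_sum[of a C "\<lambda>c. ((norm (x - c))^2) powr (-p-1)"] C unfolding s_def by simp
  have "(\<Sum>c\<in>C - {a}. ((norm (x - c))^2) powr (-p)) \<le> (\<Sum>c\<in>C - {a}. \<delta>2 powr (-p))"
  proof (rule sum_mono)
    fix c assume c: "c \<in> C - {a}"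
    show "((norm (x - c))^2) powr (-p) \<le> \<delta>2 powr (-p)"
      using sep[of c] c d2 p by (intro powr_mono2') auto
  qed
  also have "\<dots> = real (card (C - {a})) * \<delta>2 powr (-p)" by simp
  also have "\<dots> \<le> real (card C) * \<delta>2 powr (-p)"
    using C by (intro mult_right_mono) (auto simp: card_Diff1_le)
  also have "\<dots> \<le> \<eta> * (\<rho>^2) powr (-p)" by (rule cond)
  also have "\<dots> \<le> \<eta> * s powr (-p)"
    using eta s0 sr p by (intro mult_left_mono powr_mono2') auto
  finally have rest: "(\<Sum>c\<in>C - {a}. ((norm (x - c))^2) powr (-p)) \<le> \<eta> * s powr (-p)" .
  have den: "(\<Sum>c\<in>C. ((norm (x - c))^2) powr (-p)) \<le> (1+\<eta>) * s powr (-p)"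
    using rest sum.remove[OF C, of "\<lambda>c. ((norm (x - c))^2) powr (-p)"] unfolding s_def
    by (simp add: algebra_simps)
  have denpos: "0 < (\<Sum>c\<in>C. ((norm (x - c))^2) powr (-p))"
  proof (rule sum_pos[OF C(1)])
    show "C \<noteq> {}" using C by auto
    fix c assume "c \<in> C"
    show "0 < ((norm (x - c))^2) powr (-p)"
    proof (cases "c = a")
      case True then show ?thesis using s0 unfolding s_def by simp
    next
      case False
      have "(norm (x - c))^2 > 0" using sep[OF \<open>c \<in> C\<close> False] d2 by linarith
      then show ?thesis by simp
    qed
  qed
  have "1 / ((1+\<eta>) * s) = s powr (-p-1) / ((1+\<eta>) * s powr (-p))"
    using s0 eta by (simp add: powr_m1 powr_m0 field_simps)
  also have "\<dots> \<le> (\<Sum>c\<in>C. ((norm (x - c))^2) powr (-p-1)) / (\<Sum>c\<in>C. ((norm (x - c))^2) powr (-p))"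
    using num den denpos s0 by (intro frac_le sum_nonneg) auto
  finally show ?thesis unfolding Gfun0_eq s_def .
qed

lemma far_bound:
  fixes x :: "real^'n::finite"
  assumes C: "finite C" "C \<noteq> {}" and p: "p \<ge> 0" and D: "\<And>c. c \<in> C \<Longrightarrow> norm c \<le> D" "D \<ge> 0"
    and K: "K > 1" and xK: "norm x \<ge> K * D" and x0: "x \<noteq> 0"
    and cond: "((K+1)/K)^2 * (((K+1)/(K-1))^2) powr p \<le> 1 + \<eta>" and eta: "\<eta> \<ge> 0"
  shows "1 / ((1+\<eta>) * (norm x)^2) \<le> Gfun p 0 C x"
proof -
  define y where "y = norm x"
  have y0: "y > 0" unfolding y_def using x0 by simp
  have yD: "y - D > 0"
  proof (cases "D = 0")
    case True then show ?thesis using y0 by simp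
  next
    case False
    then have "D > 0" using D(2) by simp
    then have "K * D > D" using K by simp
    then show ?thesis using xK unfolding y_def by simp
  qed
  define a where "a = (y + D)^2"
  define b where "b = (y - D)^2"
  have b0: "b > 0" unfolding b_def using yD by simp
  have ab: "b \<le> (norm (x - c))^2 \<and> (norm (x - c))^2 \<le> a" if "c \<in> C" for c
  proof -
    have n1: "norm (x - c) \<ge> y - D" unfolding y_def using D(1)[OF that] norm_triangle_ineq2[of x c] by simp
    have n2: "norm (x - c) \<le> y + D" unfolding y_def using D(1)[OF that] norm_triangle_ineq4[of x c] by simp
    show ?thesis unfolding a_def b_def using n1 n2 yD by (intro conjI power_mono) auto
  qed
  have a0: "a > 0"
  proof -
    obtain c where "c \<in> C" using C by auto
    then show ?thesis using ab[of c] b0 by simp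
  qed
  have num: "real (card C) * a powr (-p-1) \<le> (\<Sum>c\<in>C. ((norm (x - c))^2) powr (-p-1))"
  proof -
    have "(\<Sum>c\<in>C. a powr (-p-1)) \<le> (\<Sum>c\<in>C. ((norm (x - c))^2) powr (-p-1))"
    proof (rule sum_mono)
      fix c assume "c \<in> C"
      show "a powr (-p-1) \<le> ((norm (x - c))^2) powr (-p-1)"
      proof (rule powr_mono2')
        show "- p - 1 \<le> 0" using p by simp
        show "0 < (norm (x - c))^2" using ab[OF \<open>c \<in> C\<close>] b0 by linarith
        show "(norm (x - c))^2 \<le> a" using ab[OF \<open>c \<in> C\<close>] by simp
      qed
    qed
    then show ?thesis by simp
  qed
  have den: "(\<Sum>c\<in>C. ((norm (x - c))^2) powr (-p)) \<le> real (card C) * b powr (-p)"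
  proof -
    have "(\<Sum>c\<in>C. ((norm (x - c))^2) powr (-p)) \<le> (\<Sum>c\<in>C. b powr (-p))"
    proof (rule sum_mono)
      fix c assume "c \<in> C"
      show "((norm (x - c))^2) powr (-p) \<le> b powr (-p)"
      proof (rule powr_mono2')
        show "- p \<le> 0" using p by simp
      qed (use b0 ab[OF \<open>c \<in> C\<close>] in auto)
    qed
    then show ?thesis by simp
  qed
  have cpos: "real (card C) > 0" using C by (simp add: card_gt_0_iff)
  have denpos: "0 < (\<Sum>c\<in>C. ((norm (x - c))^2) powr (-p))"
  proof (rule sum_pos[OF C])
    fix c assume "c \<in> C"
    then have "(norm (x - c))^2 > 0" using ab[of c] b0 by linarith
    then show "0 < ((norm (x - c))^2) powr (-p)" by simp
  qed
  have G1: "a powr (-p-1) / b powr (-p) \<le> Gfun p 0 C x"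
  proof -
    have "a powr (-p-1) / b powr (-p) = (real (card C) * a powr (-p-1)) / (real (card C) * b powr (-p))"
      using cpos by simp
    also have "\<dots> \<le> Gfun p 0 C x"
      unfolding Gfun0_eq using num den denpos cpos a0 by (intro frac_le sum_nonneg) auto
    finally show ?thesis .
  qed
  have eq: "a powr (-p-1) / b powr (-p) = 1 / (a * (a / b) powr p)"
    using a0 b0 by (simp add: powr_m1 powr_m0 powr_divide field_simps)
  have q1: "a / b \<le> ((K+1)/(K-1))^2"
  proof -
    have "(y + D) * (K - 1) \<le> (K + 1) * (y - D)"
      using xK K unfolding y_def by (simp add: algebra_simps)
    then have "(y + D) / (y - D) \<le> (K+1)/(K-1)"
      using yD K by (simp add: field_simps)
    then have "((y + D) / (y - D))^2 \<le> ((K+1)/(K-1))^2"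
      using yD D(2) y0 by (intro power_mono) auto
    then show ?thesis unfolding a_def b_def by (simp add: power_divide)
  qed
  have q2: "a \<le> ((K+1)/K)^2 * y^2"
  proof -
    have "y + D \<le> (K+1)/K * y" using xK K unfolding y_def by (simp add: field_simps)
    then have "(y + D)^2 \<le> ((K+1)/K * y)^2" using yD D(2) by (intro power_mono) auto
    also have "((K+1)/K * y)^2 = ((K+1)/K)^2 * y^2" by (rule power_mult_distrib)
    finally show ?thesis unfolding a_def .
  qed
  have "a * (a / b) powr p \<le> (((K+1)/K)^2 * y^2) * (((K+1)/(K-1))^2) powr p"
    using q1 q2 a0 b0 p by (intro mult_mono powr_mono2) auto
  also have "\<dots> = (((K+1)/K)^2 * (((K+1)/(K-1))^2) powr p) * y^2" by simp
  also have "\<dots> \<le> (1 + \<eta>) * y^2" using cond by (intro mult_right_mono) auto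
  finally have "a * (a / b) powr p \<le> (1 + \<eta>) * y^2" .
  moreover have "0 < (1 + \<eta>) * y^2 * (a * (a / b) powr p)"
    using a0 b0 eta y0 by (intro mult_pos_pos) auto
  ultimately have "1 / ((1 + \<eta>) * y^2) \<le> 1 / (a * (a / b) powr p)"
    by (intro divide_left_mono) auto
  then show ?thesis using G1 eq unfolding y_def by simp
qed

lemma int_le_nn:
  fixes f :: "'a \<Rightarrow> real"
  shows "integral\<^sup>L M f \<le> enn2real (\<integral>\<^sup>+x. ennreal (f x) \<partial>M)"
proof (cases "integrable M f")
  case True
  have im: "integrable M (\<lambda>x. max (f x) 0)" using True by (intro integrable_max) auto
  have "integral\<^sup>L M f \<le> integral\<^sup>L M (\<lambda>x. max (f x) 0)"
    using True im by (intro integral_mono) auto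
  also have "\<dots> = enn2real (\<integral>\<^sup>+x. ennreal (max (f x) 0) \<partial>M)"
    using nn_integral_eq_integral[OF im] by (simp add: integral_nonneg_AE)
  also have "(\<integral>\<^sup>+x. ennreal (max (f x) 0) \<partial>M) = (\<integral>\<^sup>+x. ennreal (f x) \<partial>M)"
    by (intro nn_integral_cong) (auto simp: max_def ennreal_neg)
  finally show ?thesis .
next
  case False
  then show ?thesis by (simp add: not_integrable_integral_eq)
qed

lemma pos_integral:
  fixes g :: "'a::euclidean_space \<Rightarrow> real"
  assumes c: "continuous_on UNIV g" and nn: "\<And>x. g x \<ge> 0" and i: "integrable lebesgue g"
    and x0: "g x0 > 0"
  shows "(LINT x|lebesgue. g x) > 0"
proof -
  obtain r where r: "r > 0" "\<And>y. dist y x0 < r \<Longrightarrow> dist (g y) (g x0) < g x0 / 2"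
    using c x0 unfolding continuous_on_iff by (metis UNIV_I half_gt_zero)
  have gb: "g x0 / 2 * indicator (ball x0 r) y \<le> g y" for y
  proof (cases "y \<in> ball x0 r")
    case True
    then have "dist (g y) (g x0) < g x0 / 2" using r(2)[of y] by (simp add: dist_commute)
    moreover have "g x0 - g y \<le> dist (g y) (g x0)" by (simp add: dist_real_def)
    ultimately show ?thesis using True by simp
  qed (simp add: nn)
  have ii: "integrable lebesgue (\<lambda>y. g x0 / 2 * indicator (ball x0 r) y)"
  proof -
    have "integrable lebesgue (indicator (ball x0 r) :: 'a \<Rightarrow> real)"
    proof (rule integrable_real_indicator)
      show "ball x0 r \<in> sets lebesgue" by simp
      show "emeasure lebesgue (ball x0 r) < \<infinity>"
        using emeasure_lborel_ball_finite[of x0 r] by simp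
    qed
    then show ?thesis by (rule integrable_mult_right)
  qed
  have "0 < g x0 / 2 * measure lborel (ball x0 r)" using x0 content_ball_pos[OF r(1)] by simp
  also have "\<dots> = (LINT y|lebesgue. g x0 / 2 * indicator (ball x0 r) y)"
    by simp
  also have "\<dots> \<le> (LINT y|lebesgue. g y)"
    using ii i gb by (intro integral_mono) auto
  finally show ?thesis .
qed

lemma mu_pos_crit:
  fixes Vt :: "real^'n::finite \<Rightarrow> real"
  assumes th: "\<theta> < 1"
    and H: "\<And>u. smooth_compact_support u \<Longrightarrow> u \<noteq> (\<lambda>x. 0) \<Longrightarrow>
        (LINT x|lebesgue. (norm (grad u x))^2) > 0 \<and>
        (LINT x|lebesgue. Vt x * (u x)^2) \<le> \<theta> * (LINT x|lebesgue. (norm (grad u x))^2)"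
  shows "mu Vt > 0"
proof -
  have "ereal (1 - \<theta>) \<le> mu Vt"
    unfolding mu_def
  proof (rule INF_greatest)
    fix u :: "real^'n \<Rightarrow> real" assume "u \<in> {u. smooth_compact_support u \<and> u \<noteq> (\<lambda>x. 0)}"
    then have A: "(LINT x|lebesgue. (norm (grad u x))^2) > 0"
      and B: "(LINT x|lebesgue. Vt x * (u x)^2) \<le> \<theta> * (LINT x|lebesgue. (norm (grad u x))^2)"
      using H by auto
    show "ereal (1 - \<theta>) \<le> ereal (((LINT x|lebesgue. (norm (grad u x))^2) - (LINT x|lebesgue. Vt x * (u x)^2))
             / (LINT x|lebesgue. (norm (grad u x))^2))"
      using A B by (simp add: le_divide_eq algebra_simps)
  qed
  moreover have "ereal (1 - \<theta>) > 0" using th by simp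
  ultimately show ?thesis by (meson less_le_trans)
qed

lemma sc1: "0 < sc 1 c x powr q"
  using sc_pos[of 1 c x] by simp

lemma sc1_ne: "sc 1 c x \<noteq> 0"
  using sc_pos[of 1 c x] by simp

lemma meas_G0:
  fixes C :: "(real^'n::finite) set"
  shows "(\<lambda>x. Gfun p 0 C x) \<in> borel_measurable lebesgue"
proof -
  have "(\<lambda>x::real^'n. Gfun p 0 C x) \<in> borel_measurable borel"
    unfolding Gfun0_eq by measurable
  then show ?thesis by (simp add: measurable_completion)
qed

lemma hardy_final:
  fixes u :: "real^'n::finite \<Rightarrow> real" and Vt :: "real^'n \<Rightarrow> real"
  assumes sm: "smooth_compact_support u" and u0: "u \<noteq> (\<lambda>x. 0)"
    and C: "finite C" "C \<noteq> {}" and N: "CARD('n) \<ge> 3"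
    and p: "p = (real CARD('n) - 2) / 4"
    and pw: "\<And>x. x \<notin> C \<Longrightarrow> Vt x \<le> \<theta> * (2*p*(real CARD('n) - 2*p - 2)) * Gfun p 0 C x"
    and th: "\<theta> \<ge> 0"
  shows "(LINT x|lebesgue. (norm (grad u x))^2) > 0"
    and "(LINT x|lebesgue. Vt x * (u x)^2) \<le> \<theta> * (LINT x|lebesgue. (norm (grad u x))^2)"
proof -
  define m where "m = 2*p*(real CARD('n) - 2*p - 2)"
  have p0: "p > 0" using N p by simp
  have "m = (real CARD('n) - 2)^2 / 4" unfolding m_def p by (simp add: power2_eq_square field_simps)
  moreover have "(real CARD('n) - 2)^2 > 0" using N by simp
  ultimately have m0: "m > 0" by linarith
  define A where "A = (LINT x|lebesgue. (norm (grad u x))^2)"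
  note U = Ck_mono_data[OF sm]
  note H1 = hardy_eps(1,3)[OF sm zero_less_one C, of p]
  obtain x0 where x0: "u x0 \<noteq> 0" using u0 by auto
  have "(LINT x|lebesgue. Kfun p 1 C x * (u x)^2) > 0"
  proof (rule pos_integral[OF _ _ H1(1)])
    show "continuous_on UNIV (\<lambda>x. Kfun p 1 C x * (u x)^2)"
      by (intro continuous_on_mult continuous_on_power cont_Kfun C U) simp
    have Kp: "Kfun p 1 C x > 0" for x
    proof -
      have "Gfun p 1 C x > 0" unfolding Gfun_def
        using Phi_pos[of 1 C p x] C
        by (intro divide_pos_pos sum_pos) (auto simp: sc1 sc1_ne)
      then have "m * Gfun p 1 C x > 0" using m0 by simp
      also have "\<dots> \<le> Kfun p 1 C x" unfolding m_def using Kfun_ge[of 1 C p x] C p0 by simp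
      finally show ?thesis .
    qed
    show "\<And>x. Kfun p 1 C x * (u x)^2 \<ge> 0" using Kp by (simp add: less_imp_le)
    show "Kfun p 1 C x0 * (u x0)^2 > 0" using Kp[of x0] x0 by simp
  qed
  then show Apos: "(LINT x|lebesgue. (norm (grad u x))^2) > 0" using H1(2) by linarith
  have "(\<integral>\<^sup>+x. ennreal (Vt x * (u x)^2) \<partial>lebesgue) \<le> (\<integral>\<^sup>+x. ennreal \<theta> * ennreal (m * Gfun p 0 C x * (u x)^2) \<partial>lebesgue)"
  proof (rule nn_integral_mono_AE)
    have ae: "AE x in lebesgue. x \<notin> C"
      by (rule AE_completion[OF AE_not_in[OF finite_imp_null_set_lborel[OF C(1)]]])
    show "AE x in lebesgue. ennreal (Vt x * (u x)^2) \<le> ennreal \<theta> * ennreal (m * Gfun p 0 C x * (u x)^2)"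
      using ae
    proof (rule AE_mp, intro AE_I2 impI)
      fix x assume "x \<notin> C"
      then have "Vt x * (u x)^2 \<le> (\<theta> * m * Gfun p 0 C x) * (u x)^2"
        using pw[of x] unfolding m_def by (intro mult_right_mono) auto
      also have "\<dots> = \<theta> * (m * Gfun p 0 C x * (u x)^2)" by simp
      finally show "ennreal (Vt x * (u x)^2) \<le> ennreal \<theta> * ennreal (m * Gfun p 0 C x * (u x)^2)"
        using th by (simp add: ennreal_mult'[symmetric] ennreal_leI)
    qed
  qed
  also have "\<dots> = ennreal \<theta> * (\<integral>\<^sup>+x. ennreal (m * Gfun p 0 C x * (u x)^2) \<partial>lebesgue)"
  proof (rule nn_integral_cmult)
    have "u \<in> borel_measurable lebesgue"
      using U(1) by (simp add: borel_measurable_continuous_onI measurable_completion)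
    then have "(\<lambda>x. m * Gfun p 0 C x * (u x)^2) \<in> borel_measurable lebesgue"
      using meas_G0 by measurable
    then show "(\<lambda>x. ennreal (m * Gfun p 0 C x * (u x)^2)) \<in> borel_measurable lebesgue"
      by (rule measurable_compose[OF _ measurable_ennreal])
  qed
  also have "\<dots> \<le> ennreal \<theta> * ennreal A"
    unfolding A_def
    by (intro mult_left_mono hardy_limit[OF sm C less_imp_le[OF p0]] m_def) (use m0 in auto)
  also have "\<dots> = ennreal (\<theta> * A)" using th by (simp add: ennreal_mult')
  finally have nn: "(\<integral>\<^sup>+x. ennreal (Vt x * (u x)^2) \<partial>lebesgue) \<le> ennreal (\<theta> * A)" .
  have "(LINT x|lebesgue. Vt x * (u x)^2) \<le> enn2real (\<integral>\<^sup>+x. ennreal (Vt x * (u x)^2) \<partial>lebesgue)"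
    by (rule int_le_nn)
  also have "\<dots> \<le> \<theta> * A"
    using nn th Apos unfolding A_def by (intro enn2real_leI) auto
  finally show "(LINT x|lebesgue. Vt x * (u x)^2) \<le> \<theta> * (LINT x|lebesgue. (norm (grad u x))^2)"
    unfolding A_def .
qed

lemma separation:
  fixes C :: "'a::metric_space set"
  assumes "finite C"
  shows "\<exists>d>0. \<forall>c\<in>C. \<forall>c'\<in>C. c \<noteq> c' \<longrightarrow> d \<le> dist c c'"
proof -
  define S where "S = (\<lambda>(c, c'). dist c c') ` {z \<in> C \<times> C. fst z \<noteq> snd z}"
  have fS: "finite (insert 1 S)" unfolding S_def using assms by auto
  define d where "d = Min (insert 1 S)"
  have "d > 0" unfolding d_def using fS by (subst Min_gr_iff) (auto simp: S_def)
  moreover have "d \<le> dist c c'" if "c \<in> C" "c' \<in> C" "c \<noteq> c'" for c c'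
  proof -
    have "dist c c' \<in> insert 1 S" unfolding S_def using that by force
    then show ?thesis unfolding d_def using fS by simp
  qed
  ultimately show ?thesis by blast
qed

lemma exists_K:
  fixes p \<eta> :: real
  assumes "p \<ge> 0" "\<eta> > 0"
  shows "\<exists>K>1. ((K+1)/K)^2 * (((K+1)/(K-1))^2) powr p \<le> 1 + \<eta>"
proof -
  have l1: "((\<lambda>K::real. (K+1)/K) \<longlongrightarrow> 1) at_top" by real_asymp
  have l2: "((\<lambda>K::real. (K+1)/(K-1)) \<longlongrightarrow> 1) at_top" by real_asymp
  have "((\<lambda>K::real. ((K+1)/K)^2 * (((K+1)/(K-1))^2) powr p) \<longlongrightarrow> 1^2 * (1^2) powr p) at_top"
    by (intro tendsto_intros l1 l2) auto
  then have "((\<lambda>K::real. ((K+1)/K)^2 * (((K+1)/(K-1))^2) powr p) \<longlongrightarrow> 1) at_top" by simp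
  then have "eventually (\<lambda>K::real. ((K+1)/K)^2 * (((K+1)/(K-1))^2) powr p < 1 + \<eta>) at_top"
    using assms by (intro order_tendstoD) auto
  moreover have "eventually (\<lambda>K::real. K > 1) at_top" by (rule eventually_gt_at_top)
  ultimately have "eventually (\<lambda>K::real. K > 1 \<and> ((K+1)/K)^2 * (((K+1)/(K-1))^2) powr p < 1 + \<eta>) at_top"
    by eventually_elim auto
  then obtain N :: real where "\<forall>K\<ge>N. K > 1 \<and> ((K+1)/K)^2 * (((K+1)/(K-1))^2) powr p < 1 + \<eta>"
    unfolding eventually_at_top_linorder by blast
  then have "N > 1 \<and> ((N+1)/N)^2 * (((N+1)/(N-1))^2) powr p < 1 + \<eta>" by blast
  then show ?thesis by (intro exI[of _ N]) auto
qed

lemma exists_rho: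
  fixes p \<eta> \<delta>2 :: real
  assumes p: "p > 0" and eta: "\<eta> > 0" "\<eta> \<le> 1" and d: "\<delta>2 > 0" and n: "n \<ge> 1"
  shows "\<exists>\<rho>0>0. \<rho>0^2 \<le> \<delta>2 \<and> n * \<delta>2 powr (-p) \<le> \<eta> * (\<rho>0^2) powr (-p)"
proof -
  define t where "t = (\<eta> / n) powr (1/p)"
  have en: "0 < \<eta> / n" "\<eta> / n \<le> 1" using eta n by auto
  have t0: "t > 0" unfolding t_def using en eta n by simp
  have t1: "t \<le> 1" unfolding t_def using powr_mono2[of "1/p" "\<eta>/n" 1] en p by simp
  define \<rho>0 where "\<rho>0 = sqrt (\<delta>2 * t)"
  have r0: "\<rho>0 > 0" unfolding \<rho>0_def using d t0 by simp
  have rsq: "\<rho>0^2 = \<delta>2 * t" unfolding \<rho>0_def using d t0 by simp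
  have "t powr (-p) = (\<eta> / n) powr (1/p * (-p))" unfolding t_def by (simp add: powr_powr)
  also have "\<dots> = (\<eta> / n) powr (-1)" using p by simp
  also have "\<dots> = n / \<eta>" using en eta n by (simp add: powr_minus_divide)
  finally have tp: "t powr (-p) = n / \<eta>" .
  have "\<eta> * (\<rho>0^2) powr (-p) = \<eta> * (\<delta>2 powr (-p) * t powr (-p))"
    unfolding rsq using d t0 by (simp add: powr_mult)
  also have "\<dots> = n * \<delta>2 powr (-p)" using eta by (simp add: tp)
  finally have eq: "\<eta> * (\<rho>0^2) powr (-p) = n * \<delta>2 powr (-p)" .
  have "\<rho>0^2 \<le> \<delta>2" unfolding rsq using d t1 by (simp add: mult_left_le_one_le)
  then show ?thesis using r0 eq by (intro exI[of _ \<rho>0]) auto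
qed

lemma term_bound:
  fixes x a :: "real^'n::finite"
  assumes "0 < rt" "rt \<le> r" "norm a + r \<le> M"
  shows "\<bar>lam * (indicator (ball a r) x - indicator (ball a rt) x) / (norm (x - a))^2\<bar>
           \<le> \<bar>lam\<bar> / rt^2 * indicator (cball 0 M) x"
proof (cases "x \<in> ball a rt")
  case True
  then have "x \<in> ball a r" using assms by auto
  with True show ?thesis by (simp add: indicator_def)
next
  case F1: False
  show ?thesis
  proof (cases "x \<in> ball a r")
    case False with F1 show ?thesis by (simp add: indicator_def)
  next
    case True
    have d1: "rt \<le> norm (x - a)" using F1 by (simp add: dist_norm norm_minus_commute)
    have xM: "x \<in> cball 0 M"
    proof -
      have "norm x \<le> norm a + norm (x - a)" using norm_triangle_ineq2[of x a] by simp
      also have "norm (x - a) < r" using True by (simp add: dist_norm norm_minus_commute)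
      finally show ?thesis using assms by simp
    qed
    have "rt^2 \<le> (norm (x - a))^2" using d1 assms by (intro power_mono) auto
    moreover have "0 < (norm (x - a))^2 * rt^2" using d1 assms by (intro mult_pos_pos) auto
    ultimately have "\<bar>lam\<bar> / (norm (x - a))^2 \<le> \<bar>lam\<bar> / rt^2"
      by (intro divide_left_mono) auto
    then show ?thesis using True F1 xM by (simp add: indicator_def abs_div)
  qed
qed

lemma tail_bound:
  fixes x :: "real^'n::finite"
  assumes "0 < R" "R \<le> R'" "R' \<le> M"
  shows "\<bar>li * (indicator (UNIV - ball 0 R) x - indicator (UNIV - ball 0 R') x) / (norm x)^2\<bar>
           \<le> \<bar>li\<bar> / R^2 * indicator (cball 0 M) x"
proof (cases "norm x < R")
  case True
  then have "norm x < R'" using assms by simp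
  with True show ?thesis by (simp add: indicator_def)
next
  case F1: False
  show ?thesis
  proof (cases "norm x < R'")
    case False with F1 show ?thesis by (simp add: indicator_def)
  next
    case True
    have "R^2 \<le> (norm x)^2" using F1 assms by (intro power_mono) auto
    moreover have "0 < (norm x)^2 * R^2" using F1 assms by (intro mult_pos_pos) auto
    ultimately have "\<bar>li\<bar> / (norm x)^2 \<le> \<bar>li\<bar> / R^2"
      by (intro divide_left_mono) auto
    then show ?thesis using True F1 assms by (simp add: indicator_def abs_div)
  qed
qed

lemma powr_sum_bound:
  fixes a b q :: real
  assumes "a \<ge> 0" "b \<ge> 0" "q > 0"
  shows "(a + b) powr q \<le> 2 powr q * (a powr q + b powr q)"
proof -
  have "(a + b) powr q \<le> (2 * max a b) powr q"
    using assms by (intro powr_mono2) auto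
  also have "\<dots> = 2 powr q * (max a b) powr q" using assms by (simp add: powr_mult)
  also have "(max a b) powr q \<le> a powr q + b powr q"
    by (cases "a \<le> b") (auto simp: max_def)
  then have "2 powr q * (max a b) powr q \<le> 2 powr q * (a powr q + b powr q)"
    by (intro mult_left_mono) auto
  finally show ?thesis .
qed

lemma LN2_zero: "LN2_Linf (\<lambda>x::real^'n::finite. 0)"
  unfolding LN2_Linf_def by auto

lemma meas_formula:
  fixes a :: "nat \<Rightarrow> real^'n::finite"
  assumes "W \<in> borel_measurable lebesgue"
  shows "(\<lambda>x. (\<Sum>i<k. lam i * indicator (ball (a i) (r i)) x / (norm (x - a i))^2)
                  + li * indicator (UNIV - ball 0 R) x / (norm x)^2 + W x) \<in> borel_measurable lebesgue"
proof -
  have [measurable]: "\<And>c::real^'n. (\<lambda>x. (norm (x - c))^2) \<in> borel_measurable borel"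
    by (intro borel_measurable_continuous_onI continuous_intros)
  have [measurable]: "(\<lambda>x::real^'n. (norm x)^2) \<in> borel_measurable borel"
    by (intro borel_measurable_continuous_onI continuous_intros)
  have [measurable]: "\<And>c::real^'n. \<And>e. ball c e \<in> sets borel" by simp
  have [measurable]: "\<And>e. (UNIV - ball (0::real^'n) e) \<in> sets borel" by auto
  have "(\<lambda>x. (\<Sum>i<k. lam i * indicator (ball (a i) (r i)) x / (norm (x - a i))^2)
                  + li * indicator (UNIV - ball 0 R) x / (norm x)^2) \<in> borel_measurable borel"
    by measurable
  then have "(\<lambda>x. (\<Sum>i<k. lam i * indicator (ball (a i) (r i)) x / (norm (x - a i))^2)
                  + li * indicator (UNIV - ball 0 R) x / (norm x)^2) \<in> borel_measurable lebesgue"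
    by (simp add: measurable_completion)
  then show ?thesis using assms by measurable
qed

lemma resc:
  fixes t m e s :: real
  assumes "1 + e > 0" "s > 0"
  shows "t * m / s = t * (1 + e) * m * (1 / ((1 + e) * s))"
proof -
  have "t * (1 + e) * m * (1 / ((1 + e) * s)) = ((1 + e) * (t * m)) / ((1 + e) * s)" by simp
  also have "\<dots> = t * m / s" using assms by (intro mult_divide_mult_cancel_left) auto
  finally show ?thesis by simp
qed

theorem lemma1p4:
  fixes V :: "real^'n::finite \<Rightarrow> real"
  assumes "CARD('n) \<ge> 3"
    and "V \<in> potential_class"
  shows "\<exists>Vt Wt. Vt \<in> potential_class \<and> LN2_Linf Wt \<and> mu Vt > 0 \<and> V = (\<lambda>x. Vt x + Wt x)"
proof -
  from assms(2) obtain k :: nat and lam :: "nat \<Rightarrow> real" and a :: "nat \<Rightarrow> real^'n"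
    and r :: "nat \<Rightarrow> real" and lam_inf R :: real and W :: "real^'n \<Rightarrow> real" where
    r: "\<forall>i<k. r i > 0" and R: "R > 0" and inj: "inj_on a {..<k}"
    and lam: "\<forall>i<k. lam i < (real CARD('n) - 2)^2 / 4"
    and laminf: "lam_inf < (real CARD('n) - 2)^2 / 4"
    and W: "LN2_Linf W"
    and V: "\<forall>x. V x = (\<Sum>i<k. lam i * indicator (ball (a i) (r i)) x / (norm (x - a i))^2)
                  + lam_inf * indicator (UNIV - ball 0 R) x / (norm x)^2 + W x"
    using assms(2) unfolding potential_class_def mem_Collect_eq by (elim exE conjE) (rule that; assumption)
  define N where "N = real CARD('n)"
  have N3: "N \<ge> 3" unfolding N_def using assms(1) by simp
  define m where "m = (N - 2)^2 / 4"
  define p where "p = (N - 2) / 4"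
  have m0: "m > 0" unfolding m_def using N3 by simp
  have p0: "p > 0" unfolding p_def using N3 by simp
  have mp: "2*p*(N - 2*p - 2) = m" unfolding m_def p_def by (simp add: power2_eq_square field_simps)
  define \<Theta> where "\<Theta> = insert (lam_inf / m) ((\<lambda>i. lam i / m) ` {..<k})"
  have fT: "finite \<Theta>" "\<Theta> \<noteq> {}" unfolding \<Theta>_def by auto
  define \<theta> where "\<theta> = max (1/2) (Max \<Theta>)"
  have MT: "Max \<Theta> < 1"
  proof -
    have "\<forall>t\<in>\<Theta>. t < 1"
      unfolding \<Theta>_def using lam laminf m0 by (auto simp: m_def N_def divide_less_eq)
    then show ?thesis using fT by simp
  qed
  have th1: "\<theta> < 1" "\<theta> \<ge> 1/2" unfolding \<theta>_def using MT by auto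
  have laml: "lam i \<le> \<theta> * m" if "i < k" for i
  proof -
    have "lam i / m \<in> \<Theta>" unfolding \<Theta>_def using that by auto
    then have "lam i / m \<le> \<theta>" unfolding \<theta>_def using fT by (simp add: le_max_iff_disj)
    then show ?thesis using m0 by (simp add: divide_le_eq)
  qed
  have laminfl: "lam_inf \<le> \<theta> * m"
  proof -
    have "lam_inf / m \<in> \<Theta>" unfolding \<Theta>_def by auto
    then have "lam_inf / m \<le> \<theta>" unfolding \<theta>_def using fT by (simp add: le_max_iff_disj)
    then show ?thesis using m0 by (simp add: divide_le_eq)
  qed
  define \<eta> where "\<eta> = min 1 ((1 - \<theta>) / (2*\<theta>))"
  have eta: "\<eta> > 0" "\<eta> \<le> 1" unfolding \<eta>_def using th1 by auto
  define \<theta>' where "\<theta>' = \<theta> * (1 + \<eta>)"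
  have th': "\<theta>' < 1" "\<theta>' \<ge> 0"
  proof -
    have "\<theta> * \<eta> \<le> \<theta> * ((1 - \<theta>) / (2*\<theta>))" using th1 unfolding \<eta>_def by (intro mult_left_mono) auto
    also have "\<dots> = (1 - \<theta>) / 2" using th1 by simp
    finally have "\<theta> * \<eta> \<le> (1 - \<theta>) / 2" .
    then show "\<theta>' < 1" unfolding \<theta>'_def using th1 by (simp add: algebra_simps)
    show "\<theta>' \<ge> 0" unfolding \<theta>'_def using th1 eta by simp
  qed
  define C where "C = insert 0 (a ` {..<k})"
  have C: "finite C" "C \<noteq> {}" unfolding C_def by simp_all
  obtain d where d: "d > 0" and sep0: "\<forall>c\<in>C. \<forall>c'\<in>C. c \<noteq> c' \<longrightarrow> d \<le> dist c c'"
    using separation[OF C(1)] by (elim exE conjE) (rule that; assumption)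
  have sep: "d \<le> dist c c'" if "c \<in> C" "c' \<in> C" "c \<noteq> c'" for c c'
    using sep0 that by simp
  define \<delta>2 where "\<delta>2 = (d/2)^2"
  have d2: "\<delta>2 > 0" unfolding \<delta>2_def using d by simp
  have "card C > 0" using C by (simp add: card_gt_0_iff)
  then have cardC: "real (card C) \<ge> 1" by simp
  obtain \<rho>0 where r0: "\<rho>0 > 0" "\<rho>0^2 \<le> \<delta>2"
    and cond0: "real (card C) * \<delta>2 powr (-p) \<le> \<eta> * (\<rho>0^2) powr (-p)"
    using exists_rho[OF p0 eta d2 cardC] by (elim exE conjE) (rule that; assumption)
  have r0sq: "\<rho>0^2 \<le> (d/2)^2" using r0 unfolding \<delta>2_def by simp
  have r0d: "\<rho>0 \<le> d/2"
    by (rule power2_le_imp_le[OF r0sq]) (use d in simp)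
  define rt where "rt i = min (r i) \<rho>0" for i
  have rt: "rt i > 0" if "i < k" for i unfolding rt_def using r that r0 by simp
  define D where "D = Max (norm ` C)"
  have D: "norm c \<le> D" if "c \<in> C" for c unfolding D_def
    by (rule Max_ge) (use C that in simp_all)
  have D0: "D \<ge> 0" using D[of 0] unfolding C_def by simp
  obtain K where K: "K > 1" and condK: "((K+1)/K)^2 * (((K+1)/(K-1))^2) powr p \<le> 1 + \<eta>"
    using exists_K[OF less_imp_le[OF p0] eta(1)] by (elim exE conjE) (rule that; assumption)
  define R' where "R' = max R (K*D + D + \<rho>0 + 1)"
  have R': "R' \<ge> R" "R' \<ge> K*D + D + \<rho>0 + 1" unfolding R'_def by auto
  define Vt where "Vt x = (\<Sum>i<k. lam i * indicator (ball (a i) (rt i)) x / (norm (x - a i))^2)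
                  + lam_inf * indicator (UNIV - ball 0 R') x / (norm x)^2" for x
  have pw: "Vt x \<le> \<theta>' * m * Gfun p 0 C x" if xC: "x \<notin> C" for x
  proof -
    have G0: "Gfun p 0 C x \<ge> 0" by (rule Gfun_nonneg) simp
    have aC: "a i \<in> C" if "i < k" for i unfolding C_def using that by simp
    have xa: "x \<noteq> a i" if "i < k" for i using xC aC[OF that] by blast
    have tm0: "\<theta>' * m \<ge> 0" using th'(2) m0 by simp
    show ?thesis
    proof (cases "\<exists>i<k. x \<in> ball (a i) (rt i)")
      case True
      then obtain i where i: "i < k" "x \<in> ball (a i) (rt i)" by blast
      have di: "dist (a i) x < \<rho>0" using i(2) unfolding rt_def by simp
      have others: "x \<notin> ball (a l) (rt l)" if l: "l < k" "l \<noteq> i" for l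
      proof
        assume xl: "x \<in> ball (a l) (rt l)"
        have dl: "dist (a l) x < \<rho>0" using xl unfolding rt_def by simp
        have "a l \<noteq> a i" using inj l i(1) by (auto dest: inj_onD)
        then have "d \<le> dist (a i) (a l)" using sep[OF aC[OF i(1)] aC[OF l(1)]] by simp
        also have "\<dots> \<le> dist (a i) x + dist x (a l)" by (rule dist_triangle)
        also have "\<dots> < \<rho>0 + \<rho>0" using di dl by (simp add: dist_commute)
        finally show False using r0d by simp
      qed
      have notail: "norm x < R'"
      proof -
        have "norm x \<le> norm (a i) + dist (a i) x"
          using norm_triangle_ineq2[of x "a i"] by (simp add: dist_norm norm_minus_commute)
        also have "\<dots> < D + \<rho>0" using D[OF aC[OF i(1)]] di by simp
        finally show ?thesis using R'(2) K D0 by (smt (verit) mult_nonneg_nonneg)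
      qed
      have "(\<Sum>l<k. lam l * indicator (ball (a l) (rt l)) x / (norm (x - a l))^2)
          = lam i * indicator (ball (a i) (rt i)) x / (norm (x - a i))^2
            + (\<Sum>l\<in>{..<k} - {i}. lam l * indicator (ball (a l) (rt l)) x / (norm (x - a l))^2)"
        using i(1) by (intro sum.remove) auto
      also have "(\<Sum>l\<in>{..<k} - {i}. lam l * indicator (ball (a l) (rt l)) x / (norm (x - a l))^2) = 0"
        using others by (intro sum.neutral) auto
      finally have Vx: "Vt x = lam i / (norm (x - a i))^2"
        unfolding Vt_def using i(2) notail by simp
      have s0: "(norm (x - a i))^2 > 0" using xa[OF i(1)] by simp
      have nb: "1 / ((1+\<eta>) * (norm (x - a i))^2) \<le> Gfun p 0 C x"
      proof (rule near_bound[OF C(1) aC[OF i(1)] p0 _ d2 _ xa[OF i(1)] _ cond0])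
        show "0 \<le> \<eta>" using eta by simp
        show "norm (x - a i) < \<rho>0" using di by (simp add: dist_norm norm_minus_commute)
        fix c assume c: "c \<in> C" "c \<noteq> a i"
        have "d \<le> dist (a i) c" using sep[OF aC[OF i(1)] c(1)] c(2) by simp
        also have "\<dots> \<le> dist (a i) x + dist x c" by (rule dist_triangle)
        finally have "d/2 \<le> norm (x - c)" using di r0d by (simp add: dist_norm)
        then have "(d/2)^2 \<le> (norm (x - c))^2" using d by (intro power_mono) auto
        then show "\<delta>2 \<le> (norm (x - c))^2" unfolding \<delta>2_def .
      qed
      have "lam i / (norm (x - a i))^2 \<le> \<theta> * m / (norm (x - a i))^2"
        using laml[OF i(1)] s0 by (intro divide_right_mono) auto
      also have "\<dots> = \<theta>' * m * (1 / ((1+\<eta>) * (norm (x - a i))^2))"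
        unfolding \<theta>'_def using eta s0 by (intro resc) auto
      also have "\<dots> \<le> \<theta>' * m * Gfun p 0 C x"
        using nb tm0 by (intro mult_left_mono) auto
      finally show ?thesis using Vx by simp
    next
      case False
      then have nob: "\<And>i. i < k \<Longrightarrow> x \<notin> ball (a i) (rt i)" by blast
      have sum0: "(\<Sum>l<k. lam l * indicator (ball (a l) (rt l)) x / (norm (x - a l))^2) = 0"
        using nob by (intro sum.neutral) auto
      show ?thesis
      proof (cases "norm x < R'")
        case True
        then have "Vt x = 0" unfolding Vt_def using sum0 by simp
        then show ?thesis using tm0 G0 by simp
      next
        case False
        then have Vx: "Vt x = lam_inf / (norm x)^2" unfolding Vt_def using sum0 by simp
        have R'0: "R' > 0" using R R'(1) by linarith
        have x0: "x \<noteq> 0" using False R'0 by auto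
        have xK: "norm x \<ge> K * D" using False R'(2) D0 r0 by linarith
        have fb: "1 / ((1+\<eta>) * (norm x)^2) \<le> Gfun p 0 C x"
          by (rule far_bound[OF C less_imp_le[OF p0] D D0 K xK x0 condK less_imp_le[OF eta(1)]])
        have s0: "(norm x)^2 > 0" using x0 by simp
        have "lam_inf / (norm x)^2 \<le> \<theta> * m / (norm x)^2"
          using laminfl s0 by (intro divide_right_mono) auto
        also have "\<dots> = \<theta>' * m * (1 / ((1+\<eta>) * (norm x)^2))"
          unfolding \<theta>'_def using eta s0 by (intro resc) auto
        also have "\<dots> \<le> \<theta>' * m * Gfun p 0 C x"
          using fb tm0 by (intro mult_left_mono) auto
        finally show ?thesis using Vx by simp
      qed
    qed
  qed
  define Wt where "Wt x = V x - Vt x" for x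
  show ?thesis
  proof (intro exI conjI)
    show "V = (\<lambda>x. Vt x + Wt x)" by (simp add: Wt_def)
    show "Vt \<in> potential_class"
      unfolding potential_class_def
    proof (rule CollectI, rule exI[of _ k], rule exI[of _ lam], rule exI[of _ a], rule exI[of _ rt],
           rule exI[of _ lam_inf], rule exI[of _ R'], rule exI[of _ "\<lambda>x. 0"], intro conjI)
      show "\<forall>i<k. rt i > 0" using rt by blast
      show "R' > 0" using R R' by linarith
      show "inj_on a {..<k}" by (rule inj)
      show "\<forall>i<k. lam i < (real CARD('n) - 2)^2 / 4" by (rule lam)
      show "lam_inf < (real CARD('n) - 2)^2 / 4" by (rule laminf)
      show "LN2_Linf (\<lambda>x::real^'n. 0)" by (rule LN2_zero)
      show "\<forall>x. Vt x = (\<Sum>i<k. lam i * indicator (ball (a i) (rt i)) x / (norm (x - a i))^2)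
                  + lam_inf * indicator (UNIV - ball 0 R') x / (norm x)^2 + 0"
        by (simp add: Vt_def)
    qed
    show "LN2_Linf Wt"
    proof -
      from W have Wm: "W \<in> borel_measurable lebesgue"
        and Wi: "integrable lebesgue (\<lambda>x. \<bar>W x\<bar> powr (real CARD('n) / 2))"
        and Wb: "\<exists>Cw. AE x in lebesgue. \<bar>W x\<bar> \<le> Cw"
        unfolding LN2_Linf_def by auto
      define q where "q = real CARD('n) / 2"
      have q0: "q > 0" unfolding q_def by simp
      define M where "M = R' + (\<Sum>i<k. norm (a i) + r i)"
      define B where "B = (\<Sum>i<k. \<bar>lam i\<bar> / (rt i)^2) + \<bar>lam_inf\<bar> / R^2"
      have B0: "B \<ge> 0" unfolding B_def by (intro add_nonneg_nonneg sum_nonneg) auto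
      have R'0: "R' > 0" using R R'(1) by linarith
      have Mi: "norm (a i) + r i \<le> M" if "i < k" for i
      proof -
        have "norm (a i) + r i \<le> (\<Sum>i<k. norm (a i) + r i)"
          using that r by (intro member_le_sum) (auto intro: add_nonneg_nonneg less_imp_le)
        then show ?thesis unfolding M_def using R'0 by simp
      qed
      have MR: "R' \<le> M"
      proof -
        have "0 \<le> (\<Sum>i<k. norm (a i) + r i)"
          using r by (intro sum_nonneg) (auto intro: add_nonneg_nonneg less_imp_le)
        then show ?thesis unfolding M_def by simp
      qed
      have Wt_eq: "Wt x = (\<Sum>i<k. lam i * (indicator (ball (a i) (r i)) x - indicator (ball (a i) (rt i)) x) / (norm (x - a i))^2)
          + lam_inf * (indicator (UNIV - ball 0 R) x - indicator (UNIV - ball 0 R') x) / (norm x)^2 + W x" for x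
        unfolding Wt_def Vt_def V[rule_format]
        by (simp add: sum_subtractf[symmetric] right_diff_distrib diff_divide_distrib algebra_simps)
      have Eb: "\<bar>Wt x - W x\<bar> \<le> B * indicator (cball 0 M) x" for x
      proof -
        have "Wt x - W x = (\<Sum>i<k. lam i * (indicator (ball (a i) (r i)) x - indicator (ball (a i) (rt i)) x) / (norm (x - a i))^2)
          + lam_inf * (indicator (UNIV - ball 0 R) x - indicator (UNIV - ball 0 R') x) / (norm x)^2"
          (is "_ = ?S + ?T") unfolding Wt_eq by simp
        then have "\<bar>Wt x - W x\<bar> \<le> \<bar>?S\<bar> + \<bar>?T\<bar>"
          by (simp only: abs_triangle_ineq)
        also have "\<dots> \<le> (\<Sum>i<k. \<bar>lam i * (indicator (ball (a i) (r i)) x - indicator (ball (a i) (rt i)) x) / (norm (x - a i))^2\<bar>)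
            + \<bar>lam_inf\<bar> / R^2 * indicator (cball 0 M) x"
          by (intro add_mono sum_abs tail_bound R R'(1) MR)
        also have "\<dots> \<le> (\<Sum>i<k. \<bar>lam i\<bar> / (rt i)^2 * indicator (cball 0 M) x)
            + \<bar>lam_inf\<bar> / R^2 * indicator (cball 0 M) x"
        proof (intro add_mono sum_mono order_refl)
          fix i assume "i \<in> {..<k}"
          then have i: "i < k" by simp
          show "\<bar>lam i * (indicator (ball (a i) (r i)) x - indicator (ball (a i) (rt i)) x) / (norm (x - a i))^2\<bar>
                \<le> \<bar>lam i\<bar> / (rt i)^2 * indicator (cball 0 M) x"
            by (rule term_bound[OF rt[OF i] _ Mi[OF i]]) (simp add: rt_def)
        qed
        also have "\<dots> = B * indicator (cball 0 M) x"
          unfolding B_def by (simp add: sum_distrib_right distrib_right)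
        finally show ?thesis .
      qed
      have Vm: "V \<in> borel_measurable lebesgue"
      proof -
        have "V = (\<lambda>x. (\<Sum>i<k. lam i * indicator (ball (a i) (r i)) x / (norm (x - a i))^2)
                  + lam_inf * indicator (UNIV - ball 0 R) x / (norm x)^2 + W x)"
          using V by auto
        then show ?thesis using meas_formula[OF Wm] by simp
      qed
      have Vtm: "Vt \<in> borel_measurable lebesgue"
      proof -
        have "Vt = (\<lambda>x. (\<Sum>i<k. lam i * indicator (ball (a i) (rt i)) x / (norm (x - a i))^2)
                  + lam_inf * indicator (UNIV - ball 0 R') x / (norm x)^2 + (\<lambda>x. 0) x)"
          unfolding Vt_def by simp
        moreover have "(\<lambda>x::real^'n. 0::real) \<in> borel_measurable lebesgue" by simp
        ultimately show ?thesis
          using meas_formula[where W="\<lambda>x. 0" and k=k and lam=lam and a=a and r=rt and li=lam_inf and R=R'] by simp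
      qed
      have Wtm: "Wt \<in> borel_measurable lebesgue"
        unfolding Wt_def using Vm Vtm by measurable
      have int: "integrable lebesgue (\<lambda>x. \<bar>Wt x\<bar> powr q)"
      proof (rule Bochner_Integration.integrable_bound)
        show "integrable lebesgue (\<lambda>x. 2 powr q * (\<bar>W x\<bar> powr q + B powr q * indicator (cball 0 M) x))"
        proof -
          have Wi': "integrable lebesgue (\<lambda>x. \<bar>W x\<bar> powr q)" using Wi unfolding q_def .
          have ind: "integrable lebesgue (indicator (cball 0 M) :: real^'n \<Rightarrow> real)"
          proof (rule integrable_real_indicator)
            show "cball 0 M \<in> sets lebesgue" by simp
            show "emeasure lebesgue (cball (0::real^'n) M) < \<infinity>"
              using emeasure_bounded_finite[of "cball (0::real^'n) M"] by simp
          qed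
          show ?thesis by (intro integrable_mult_right Bochner_Integration.integrable_add Wi' ind)
        qed
        show "(\<lambda>x. \<bar>Wt x\<bar> powr q) \<in> borel_measurable lebesgue" using Wtm by measurable
        show "AE x in lebesgue. norm (\<bar>Wt x\<bar> powr q) \<le> norm (2 powr q * (\<bar>W x\<bar> powr q + B powr q * indicator (cball 0 M) x))"
        proof (rule AE_I2)
          fix x :: "real^'n"
          have i01: "(B * indicator (cball 0 M) x) powr q = B powr q * indicator (cball 0 M) x"
            by (simp add: indicator_def)
          have "\<bar>Wt x\<bar> \<le> \<bar>W x\<bar> + B * indicator (cball 0 M) x"
            using Eb[of x] by linarith
          then have "\<bar>Wt x\<bar> powr q \<le> (\<bar>W x\<bar> + B * indicator (cball 0 M) x) powr q"
            using q0 by (intro powr_mono2) auto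
          also have "\<dots> \<le> 2 powr q * (\<bar>W x\<bar> powr q + (B * indicator (cball 0 M) x) powr q)"
            using B0 q0 by (intro powr_sum_bound) auto
          finally have "\<bar>Wt x\<bar> powr q \<le> 2 powr q * (\<bar>W x\<bar> powr q + B powr q * indicator (cball 0 M) x)"
            unfolding i01 .
          moreover have "0 \<le> 2 powr q * (\<bar>W x\<bar> powr q + B powr q * indicator (cball 0 M) x)"
            by (intro mult_nonneg_nonneg add_nonneg_nonneg) auto
          ultimately show "norm (\<bar>Wt x\<bar> powr q) \<le> norm (2 powr q * (\<bar>W x\<bar> powr q + B powr q * indicator (cball 0 M) x))"
            by simp
        qed
      qed
      obtain Cw where Cw: "AE x in lebesgue. \<bar>W x\<bar> \<le> Cw" using Wb by blast
      have "AE x in lebesgue. \<bar>Wt x\<bar> \<le> Cw + B"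
        using Cw
      proof (rule AE_mp, intro AE_I2 impI)
        fix x assume "\<bar>W x\<bar> \<le> Cw"
        moreover have "B * indicator (cball 0 M) x \<le> B" using B0 by (simp add: indicator_def)
        ultimately show "\<bar>Wt x\<bar> \<le> Cw + B" using Eb[of x] by linarith
      qed
      then show ?thesis unfolding LN2_Linf_def using Wtm int unfolding q_def by blast
    qed
    show "mu Vt > 0"
    proof (rule mu_pos_crit[OF th'(1)])
      fix u :: "real^'n \<Rightarrow> real" assume sm: "smooth_compact_support u" and u0: "u \<noteq> (\<lambda>x. 0)"
      have pdef: "p = (real CARD('n) - 2) / 4" by (simp add: p_def N_def)
      have pw': "Vt x \<le> \<theta>' * (2*p*(real CARD('n) - 2*p - 2)) * Gfun p 0 C x" if "x \<notin> C" for x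
        using pw[OF that] mp unfolding N_def by simp
      show "(LINT x|lebesgue. (norm (grad u x))^2) > 0 \<and>
        (LINT x|lebesgue. Vt x * (u x)^2) \<le> \<theta>' * (LINT x|lebesgue. (norm (grad u x))^2)"
        using hardy_final[OF sm u0 C assms(1) pdef pw' th'(2)] by simp
    qed
  qed
qed

end
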